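(* Let $M$ be a categorical monoid, $\mathcal F$ a family of finite subgroups of $\mathrm{Ob}(M)$, and $G$ a discrete group. Let $f\colon C\to D$ be a $\mathcal G_{\mathcal F,G}$-equivalence in $(M\times G)\text{-}\mathbf{Cat}$ such that $G$ acts freely on both $C$ and $D$. Then the induced functor of orbit categories $f/G\colon C/G\to D/G$ is an $\mathcal F$-equivalence in $M\text{-}\mathbf{Cat}$.
   Context: A categorical monoid is a strict monoidal category; $M\text{-}\mathbf{Cat}$ denotes small categories with strict $M$-action. A family of finite subgroups is a collection closed under subgroups and conjugation. For a subgroup $H$ and an $M$-category $C$, $C^H$ is the subcategory of $H$-fixed objects and morphisms; a map $f$ is an $\mathcal F$-equivalence if $f^H$ is an equivalence of categories for all $H\in\mathcal F$. $\mathcal G_{\mathcal F,G}$ is the collection of graph subgroups $\Gamma_{H,\phi}=\{(h,\phi(h)):h\in H\}\subset \mathrm{Ob}(M)\times G$ with $H\in\mathcal F$ and $\phi\colon H\to G$ a homomorphism. $G$ acts freely on a category if it acts freely on its set of objects (hence on morphisms). $C/G$ denotes the quotient (colimit) in $\mathbf{Cat}$ with the induced $M$-action. *)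

theory Defs
  imports "HOL-Algebra.Group"
begin

record ('o,'a) cat =
  Ob  :: "'o set"
  Ar  :: "'a set"
  Dom :: "'a \<Rightarrow> 'o"
  Cod :: "'a \<Rightarrow> 'o"
  Idt :: "'o \<Rightarrow> 'a"
  Cmp :: "'a \<Rightarrow> 'a \<Rightarrow> 'a"   (* Cmp C g f = g \<circ> f *)

definition is_cat :: "('o,'a) cat \<Rightarrow> bool" where
  "is_cat C \<equiv>
    (\<forall>f\<in>Ar C. Dom C f \<in> Ob C \<and> Cod C f \<in> Ob C) \<and>
    (\<forall>x\<in>Ob C. Idt C x \<in> Ar C \<and> Dom C (Idt C x) = x \<and> Cod C (Idt C x) = x) \<and>
    (\<forall>f\<in>Ar C. \<forall>g\<in>Ar C. Cod C f = Dom C g \<longrightarrow>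
        Cmp C g f \<in> Ar C \<and> Dom C (Cmp C g f) = Dom C f \<and> Cod C (Cmp C g f) = Cod C g) \<and>
    (\<forall>f\<in>Ar C. Cmp C f (Idt C (Dom C f)) = f \<and> Cmp C (Idt C (Cod C f)) f = f) \<and>
    (\<forall>f\<in>Ar C. \<forall>g\<in>Ar C. \<forall>h\<in>Ar C. Cod C f = Dom C g \<and> Cod C g = Dom C h \<longrightarrow>
        Cmp C h (Cmp C g f) = Cmp C (Cmp C h g) f)"

record ('o1,'a1,'o2,'a2) ftr =
  FO :: "'o1 \<Rightarrow> 'o2"
  FA :: "'a1 \<Rightarrow> 'a2"

definition is_functor :: "('o1,'a1) cat \<Rightarrow> ('o2,'a2) cat \<Rightarrow> ('o1,'a1,'o2,'a2) ftr \<Rightarrow> bool" where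
  "is_functor C D F \<equiv> is_cat C \<and> is_cat D \<and>
    (\<forall>x\<in>Ob C. FO F x \<in> Ob D) \<and>
    (\<forall>f\<in>Ar C. FA F f \<in> Ar D \<and> Dom D (FA F f) = FO F (Dom C f) \<and> Cod D (FA F f) = FO F (Cod C f)) \<and>
    (\<forall>x\<in>Ob C. FA F (Idt C x) = Idt D (FO F x)) \<and>
    (\<forall>f\<in>Ar C. \<forall>g\<in>Ar C. Cod C f = Dom C g \<longrightarrow> FA F (Cmp C g f) = Cmp D (FA F g) (FA F f))"

definition fid :: "('o,'a,'o,'a) ftr" where
  "fid = \<lparr>FO = id, FA = id\<rparr>"

(* fcomp F K = K after F *)
definition fcomp :: "('o1,'a1,'o2,'a2) ftr \<Rightarrow> ('o2,'a2,'o3,'a3) ftr \<Rightarrow> ('o1,'a1,'o3,'a3) ftr" where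
  "fcomp F K = \<lparr>FO = FO K \<circ> FO F, FA = FA K \<circ> FA F\<rparr>"

definition cat_iso :: "('o,'a) cat \<Rightarrow> 'a \<Rightarrow> bool" where
  "cat_iso C a \<equiv> a \<in> Ar C \<and> (\<exists>b\<in>Ar C. Dom C b = Cod C a \<and> Cod C b = Dom C a \<and>
      Cmp C b a = Idt C (Dom C a) \<and> Cmp C a b = Idt C (Cod C a))"

definition nat_iso :: "('o1,'a1) cat \<Rightarrow> ('o2,'a2) cat \<Rightarrow> ('o1,'a1,'o2,'a2) ftr \<Rightarrow>
    ('o1,'a1,'o2,'a2) ftr \<Rightarrow> ('o1 \<Rightarrow> 'a2) \<Rightarrow> bool" where
  "nat_iso C D F K \<eta> \<equiv>
    (\<forall>x\<in>Ob C. \<eta> x \<in> Ar D \<and> Dom D (\<eta> x) = FO F x \<and> Cod D (\<eta> x) = FO K x \<and> cat_iso D (\<eta> x)) \<and>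
    (\<forall>f\<in>Ar C. Cmp D (\<eta> (Cod C f)) (FA F f) = Cmp D (FA K f) (\<eta> (Dom C f)))"

definition cat_equivalence :: "('o1,'a1) cat \<Rightarrow> ('o2,'a2) cat \<Rightarrow> ('o1,'a1,'o2,'a2) ftr \<Rightarrow> bool" where
  "cat_equivalence C D F \<equiv> is_functor C D F \<and>
    (\<exists>K \<eta> \<epsilon>. is_functor D C K \<and> nat_iso C C fid (fcomp F K) \<eta> \<and> nat_iso D D fid (fcomp K F) \<epsilon>)"

definition prod_cat :: "('o1,'a1) cat \<Rightarrow> ('o2,'a2) cat \<Rightarrow> ('o1 \<times> 'o2, 'a1 \<times> 'a2) cat" where
  "prod_cat C D = \<lparr>Ob = Ob C \<times> Ob D, Ar = Ar C \<times> Ar D,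
     Dom = (\<lambda>(f,g). (Dom C f, Dom D g)), Cod = (\<lambda>(f,g). (Cod C f, Cod D g)),
     Idt = (\<lambda>(x,y). (Idt C x, Idt D y)),
     Cmp = (\<lambda>(f,g) (f',g'). (Cmp C f f', Cmp D g g'))\<rparr>"

definition strict_monoidal :: "('o,'a) cat \<Rightarrow> ('o \<times> 'o, 'a \<times> 'a, 'o, 'a) ftr \<Rightarrow> 'o \<Rightarrow> bool" where
  "strict_monoidal M T u \<equiv> is_functor (prod_cat M M) M T \<and> u \<in> Ob M \<and>
    (\<forall>x\<in>Ob M. \<forall>y\<in>Ob M. \<forall>z\<in>Ob M. FO T (FO T (x,y), z) = FO T (x, FO T (y,z))) \<and>
    (\<forall>a\<in>Ar M. \<forall>b\<in>Ar M. \<forall>c\<in>Ar M. FA T (FA T (a,b), c) = FA T (a, FA T (b,c))) \<and>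
    (\<forall>x\<in>Ob M. FO T (u,x) = x \<and> FO T (x,u) = x) \<and>
    (\<forall>a\<in>Ar M. FA T (Idt M u, a) = a \<and> FA T (a, Idt M u) = a)"

definition disc_cat :: "('g,'z) monoid_scheme \<Rightarrow> ('g,'g) cat" where
  "disc_cat G = \<lparr>Ob = carrier G, Ar = carrier G, Dom = id, Cod = id, Idt = id, Cmp = (\<lambda>g f. g)\<rparr>"

definition disc_tensor :: "('g,'z) monoid_scheme \<Rightarrow> ('g \<times> 'g, 'g \<times> 'g, 'g, 'g) ftr" where
  "disc_tensor G = \<lparr>FO = (\<lambda>(g,h). g \<otimes>\<^bsub>G\<^esub> h), FA = (\<lambda>(g,h). g \<otimes>\<^bsub>G\<^esub> h)\<rparr>"

definition prod_tensor :: "('o1 \<times> 'o1, 'a1 \<times> 'a1, 'o1, 'a1) ftr \<Rightarrow> ('o2 \<times> 'o2, 'a2 \<times> 'a2, 'o2, 'a2) ftr \<Rightarrow>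
    (('o1 \<times> 'o2) \<times> ('o1 \<times> 'o2), ('a1 \<times> 'a2) \<times> ('a1 \<times> 'a2), 'o1 \<times> 'o2, 'a1 \<times> 'a2) ftr" where
  "prod_tensor T1 T2 = \<lparr>FO = (\<lambda>((a,b),(c,d)). (FO T1 (a,c), FO T2 (b,d))),
                        FA = (\<lambda>((a,b),(c,d)). (FA T1 (a,c), FA T2 (b,d)))\<rparr>"

definition strict_action :: "('o,'a) cat \<Rightarrow> ('o \<times> 'o, 'a \<times> 'a, 'o, 'a) ftr \<Rightarrow> 'o \<Rightarrow>
    ('c,'ca) cat \<Rightarrow> ('o \<times> 'c, 'a \<times> 'ca, 'c, 'ca) ftr \<Rightarrow> bool" where
  "strict_action M T u C A \<equiv> is_functor (prod_cat M C) C A \<and>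
    (\<forall>m\<in>Ob M. \<forall>n\<in>Ob M. \<forall>x\<in>Ob C. FO A (FO T (m,n), x) = FO A (m, FO A (n,x))) \<and>
    (\<forall>a\<in>Ar M. \<forall>b\<in>Ar M. \<forall>f\<in>Ar C. FA A (FA T (a,b), f) = FA A (a, FA A (b,f))) \<and>
    (\<forall>x\<in>Ob C. FO A (u,x) = x) \<and>
    (\<forall>f\<in>Ar C. FA A (Idt M u, f) = f)"

definition equivariant :: "('o,'a) cat \<Rightarrow> ('c,'ca) cat \<Rightarrow> ('d,'da) cat \<Rightarrow>
    ('o \<times> 'c, 'a \<times> 'ca, 'c, 'ca) ftr \<Rightarrow> ('o \<times> 'd, 'a \<times> 'da, 'd, 'da) ftr \<Rightarrow> ('c,'ca,'d,'da) ftr \<Rightarrow> bool" where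
  "equivariant M C D A B F \<equiv>
    (\<forall>m\<in>Ob M. \<forall>x\<in>Ob C. FO F (FO A (m,x)) = FO B (m, FO F x)) \<and>
    (\<forall>a\<in>Ar M. \<forall>f\<in>Ar C. FA F (FA A (a,f)) = FA B (a, FA F f))"

definition fix_cat :: "('o,'a) cat \<Rightarrow> ('c,'ca) cat \<Rightarrow> ('o \<times> 'c, 'a \<times> 'ca, 'c, 'ca) ftr \<Rightarrow> 'o set \<Rightarrow> ('c,'ca) cat" where
  "fix_cat M C A H = C\<lparr>Ob := {x\<in>Ob C. \<forall>h\<in>H. FO A (h,x) = x},
                       Ar := {f\<in>Ar C. \<forall>h\<in>H. FA A (Idt M h, f) = f}\<rparr>"

definition fam_equiv :: "('o,'a) cat \<Rightarrow> ('c,'ca) cat \<Rightarrow> ('d,'da) cat \<Rightarrow>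
    ('o \<times> 'c, 'a \<times> 'ca, 'c, 'ca) ftr \<Rightarrow> ('o \<times> 'd, 'a \<times> 'da, 'd, 'da) ftr \<Rightarrow> 'o set set \<Rightarrow>
    ('c,'ca,'d,'da) ftr \<Rightarrow> bool" where
  "fam_equiv M C D A B Fam F \<equiv> (\<forall>H\<in>Fam. cat_equivalence (fix_cat M C A H) (fix_cat M D B H) F)"

definition mon_subgroup :: "('o,'a) cat \<Rightarrow> ('o \<times> 'o, 'a \<times> 'a, 'o, 'a) ftr \<Rightarrow> 'o \<Rightarrow> 'o set \<Rightarrow> bool" where
  "mon_subgroup M T u H \<equiv> H \<subseteq> Ob M \<and> u \<in> H \<and>
    (\<forall>h\<in>H. \<forall>k\<in>H. FO T (h,k) \<in> H) \<and>
    (\<forall>h\<in>H. \<exists>k\<in>H. FO T (h,k) = u \<and> FO T (k,h) = u)"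

definition fin_family :: "('o,'a) cat \<Rightarrow> ('o \<times> 'o, 'a \<times> 'a, 'o, 'a) ftr \<Rightarrow> 'o \<Rightarrow> 'o set set \<Rightarrow> bool" where
  "fin_family M T u Fam \<equiv>
    (\<forall>H\<in>Fam. mon_subgroup M T u H \<and> finite H) \<and>
    (\<forall>H\<in>Fam. \<forall>K. mon_subgroup M T u K \<and> K \<subseteq> H \<longrightarrow> K \<in> Fam) \<and>
    (\<forall>H\<in>Fam. \<forall>v\<in>Ob M. \<forall>w\<in>Ob M. FO T (v,w) = u \<and> FO T (w,v) = u \<longrightarrow>
        {FO T (FO T (v,h), w) | h. h \<in> H} \<in> Fam)"

definition graph_subgroups :: "('o \<times> 'o, 'a \<times> 'a, 'o, 'a) ftr \<Rightarrow> 'o set set \<Rightarrow> ('g,'z) monoid_scheme \<Rightarrow> ('o \<times> 'g) set set" where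
  "graph_subgroups T Fam G = {{(h, \<phi> h) | h. h \<in> H} | H \<phi>. H \<in> Fam \<and> \<phi> \<in> H \<rightarrow> carrier G \<and>
      (\<forall>h\<in>H. \<forall>k\<in>H. \<phi> (FO T (h,k)) = \<phi> h \<otimes>\<^bsub>G\<^esub> \<phi> k)}"

definition free_G_action :: "'o \<Rightarrow> ('g,'z) monoid_scheme \<Rightarrow> ('c,'ca) cat \<Rightarrow>
    (('o \<times> 'g) \<times> 'c, ('a \<times> 'g) \<times> 'ca, 'c, 'ca) ftr \<Rightarrow> bool" where
  "free_G_action u G C A \<equiv> (\<forall>x\<in>Ob C. \<forall>g\<in>carrier G. FO A ((u,g),x) = x \<longrightarrow> g = \<one>\<^bsub>G\<^esub>)"

definition orb_o :: "'o \<Rightarrow> ('g,'z) monoid_scheme \<Rightarrow> (('o \<times> 'g) \<times> 'c, ('a \<times> 'g) \<times> 'ca, 'c, 'ca) ftr \<Rightarrow> 'c \<Rightarrow> 'c set" where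
  "orb_o u G A x = {FO A ((u,g),x) | g. g \<in> carrier G}"

definition orb_a :: "('o,'a) cat \<Rightarrow> 'o \<Rightarrow> ('g,'z) monoid_scheme \<Rightarrow> (('o \<times> 'g) \<times> 'c, ('a \<times> 'g) \<times> 'ca, 'c, 'ca) ftr \<Rightarrow> 'ca \<Rightarrow> 'ca set" where
  "orb_a M u G A f = {FA A ((Idt M u, g), f) | g. g \<in> carrier G}"

text \<open>The quotient category C/G (explicit description of the colimit in Cat, valid for
  actions that are free on objects): objects are orbits of objects, arrows are orbits
  of arrows, and composition of orbits is computed on composable representatives.\<close>
definition quot_cat :: "('o,'a) cat \<Rightarrow> 'o \<Rightarrow> ('g,'z) monoid_scheme \<Rightarrow> ('c,'ca) cat \<Rightarrow>
    (('o \<times> 'g) \<times> 'c, ('a \<times> 'g) \<times> 'ca, 'c, 'ca) ftr \<Rightarrow> ('c set, 'ca set) cat" where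
  "quot_cat M u G C A = \<lparr>Ob = orb_o u G A ` Ob C, Ar = orb_a M u G A ` Ar C,
     Dom = (\<lambda>S. Dom C ` S), Cod = (\<lambda>S. Cod C ` S), Idt = (\<lambda>X. Idt C ` X),
     Cmp = (\<lambda>T S. {Cmp C t s | t s. t \<in> T \<and> s \<in> S \<and> Cod C s = Dom C t})\<rparr>"

definition quot_action :: "('g,'z) monoid_scheme \<Rightarrow> (('o \<times> 'g) \<times> 'c, ('a \<times> 'g) \<times> 'ca, 'c, 'ca) ftr \<Rightarrow>
    ('o \<times> 'c set, 'a \<times> 'ca set, 'c set, 'ca set) ftr" where
  "quot_action G A = \<lparr>FO = (\<lambda>(m,X). (\<lambda>x. FO A ((m, \<one>\<^bsub>G\<^esub>), x)) ` X),
                      FA = (\<lambda>(a,S). (\<lambda>s. FA A ((a, \<one>\<^bsub>G\<^esub>), s)) ` S)\<rparr>"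

definition quot_ftr :: "('c,'ca,'d,'da) ftr \<Rightarrow> ('c set,'ca set,'d set,'da set) ftr" where
  "quot_ftr F = \<lparr>FO = (\<lambda>X. FO F ` X), FA = (\<lambda>S. FA F ` S)\<rparr>"

end

theory Submission
  imports Defs
begin



locale catl = fixes C :: "('o,'a) cat" assumes iscat: "is_cat C"
begin
lemma dom_ob[simp]: "f \<in> Ar C \<Longrightarrow> Dom C f \<in> Ob C" using iscat unfolding is_cat_def by blast
lemma cod_ob[simp]: "f \<in> Ar C \<Longrightarrow> Cod C f \<in> Ob C" using iscat unfolding is_cat_def by blast
lemma id_ar[simp]: "x \<in> Ob C \<Longrightarrow> Idt C x \<in> Ar C" using iscat unfolding is_cat_def by blast
lemma id_dom[simp]: "x \<in> Ob C \<Longrightarrow> Dom C (Idt C x) = x" using iscat unfolding is_cat_def by blast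
lemma id_cod[simp]: "x \<in> Ob C \<Longrightarrow> Cod C (Idt C x) = x" using iscat unfolding is_cat_def by blast
lemma cmp_ar[simp]: "f \<in> Ar C \<Longrightarrow> g \<in> Ar C \<Longrightarrow> Cod C f = Dom C g \<Longrightarrow> Cmp C g f \<in> Ar C"
  using iscat unfolding is_cat_def by blast
lemma cmp_dom[simp]: "f \<in> Ar C \<Longrightarrow> g \<in> Ar C \<Longrightarrow> Cod C f = Dom C g \<Longrightarrow> Dom C (Cmp C g f) = Dom C f"
  using iscat unfolding is_cat_def by blast
lemma cmp_cod[simp]: "f \<in> Ar C \<Longrightarrow> g \<in> Ar C \<Longrightarrow> Cod C f = Dom C g \<Longrightarrow> Cod C (Cmp C g f) = Cod C g"
  using iscat unfolding is_cat_def by blast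
lemma id_r[simp]: "f \<in> Ar C \<Longrightarrow> Dom C f = x \<Longrightarrow> Cmp C f (Idt C x) = f"
  using iscat unfolding is_cat_def by blast
lemma id_l[simp]: "f \<in> Ar C \<Longrightarrow> Cod C f = x \<Longrightarrow> Cmp C (Idt C x) f = f"
  using iscat unfolding is_cat_def by blast
lemma cancel: "f \<in> Ar C \<Longrightarrow> g \<in> Ar C \<Longrightarrow> h \<in> Ar C \<Longrightarrow> Cod C f = Dom C g \<Longrightarrow> Cod C h = Dom C f \<Longrightarrow>
   Cmp C g f = Idt C (Dom C f) \<Longrightarrow> Cmp C g (Cmp C f h) = h"
  using iscat unfolding is_cat_def by metis
lemma assoc: "f \<in> Ar C \<Longrightarrow> g \<in> Ar C \<Longrightarrow> h \<in> Ar C \<Longrightarrow> Cod C f = Dom C g \<Longrightarrow> Cod C g = Dom C h \<Longrightarrow>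
   Cmp C h (Cmp C g f) = Cmp C (Cmp C h g) f"
  using iscat unfolding is_cat_def by blast
end

locale ftrl = fixes C :: "('o1,'a1) cat" and D :: "('o2,'a2) cat" and F :: "('o1,'a1,'o2,'a2) ftr"
  assumes isf: "is_functor C D F"
begin
sublocale C: catl C using isf unfolding is_functor_def catl_def by blast
sublocale D: catl D using isf unfolding is_functor_def catl_def by blast
lemma F_ob[simp]: "x \<in> Ob C \<Longrightarrow> FO F x \<in> Ob D" using isf unfolding is_functor_def by blast
lemma F_ar[simp]: "f \<in> Ar C \<Longrightarrow> FA F f \<in> Ar D" using isf unfolding is_functor_def by blast
lemma F_dom[simp]: "f \<in> Ar C \<Longrightarrow> Dom D (FA F f) = FO F (Dom C f)" using isf unfolding is_functor_def by blast
lemma F_cod[simp]: "f \<in> Ar C \<Longrightarrow> Cod D (FA F f) = FO F (Cod C f)" using isf unfolding is_functor_def by blast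
lemma F_id[simp]: "x \<in> Ob C \<Longrightarrow> FA F (Idt C x) = Idt D (FO F x)" using isf unfolding is_functor_def by blast
lemma F_cmp[simp]: "f \<in> Ar C \<Longrightarrow> g \<in> Ar C \<Longrightarrow> Cod C f = Dom C g \<Longrightarrow> FA F (Cmp C g f) = Cmp D (FA F g) (FA F f)"
  using isf unfolding is_functor_def by blast
end

definition full :: "('o1,'a1) cat \<Rightarrow> ('o2,'a2) cat \<Rightarrow> ('o1,'a1,'o2,'a2) ftr \<Rightarrow> bool" where
  "full C D F \<equiv> \<forall>x\<in>Ob C. \<forall>y\<in>Ob C. \<forall>b\<in>Ar D. Dom D b = FO F x \<and> Cod D b = FO F y \<longrightarrow>
     (\<exists>a\<in>Ar C. Dom C a = x \<and> Cod C a = y \<and> FA F a = b)"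
definition faithful :: "('o1,'a1) cat \<Rightarrow> ('o2,'a2) cat \<Rightarrow> ('o1,'a1,'o2,'a2) ftr \<Rightarrow> bool" where
  "faithful C D F \<equiv> \<forall>a\<in>Ar C. \<forall>a'\<in>Ar C. Dom C a = Dom C a' \<and> Cod C a = Cod C a' \<and> FA F a = FA F a' \<longrightarrow> a = a'"
definition esurj :: "('o1,'a1) cat \<Rightarrow> ('o2,'a2) cat \<Rightarrow> ('o1,'a1,'o2,'a2) ftr \<Rightarrow> bool" where
  "esurj C D F \<equiv> \<forall>y\<in>Ob D. \<exists>x\<in>Ob C. \<exists>b. cat_iso D b \<and> Dom D b = FO F x \<and> Cod D b = y"

lemma fid_simps[simp]: "FO fid x = x" "FA fid a = a" by (simp_all add: fid_def)
lemma fcomp_simps[simp]: "FO (fcomp F K) x = FO K (FO F x)" "FA (fcomp F K) a = FA K (FA F a)"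
  by (simp_all add: fcomp_def)

lemma equiv_sym:
  assumes "cat_equivalence C D F"
  shows "\<exists>K. cat_equivalence D C K"
  using assms unfolding cat_equivalence_def by blast

lemma equiv_faithful:
  assumes "cat_equivalence C D F" shows "faithful C D F"
proof -
  obtain K \<eta> \<epsilon> where F: "is_functor C D F" and K: "is_functor D C K"
    and eta: "nat_iso C C fid (fcomp F K) \<eta>" using assms unfolding cat_equivalence_def by blast
  interpret ftrl C D F using F by unfold_locales
  show ?thesis unfolding faithful_def
  proof (intro ballI impI)
    fix a a' assume a: "a \<in> Ar C" and a': "a' \<in> Ar C" and e: "Dom C a = Dom C a' \<and> Cod C a = Cod C a' \<and> FA F a = FA F a'"
    define x where "x = Dom C a" define y where "y = Cod C a"
    have n1: "Cmp C (\<eta> y) a = Cmp C (FA K (FA F a)) (\<eta> x)" using eta a unfolding nat_iso_def x_def y_def by auto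
    have n2: "Cmp C (\<eta> y) a' = Cmp C (FA K (FA F a')) (\<eta> x)" using eta a' e unfolding nat_iso_def x_def y_def by auto
    have y: "y \<in> Ob C" using a y_def by simp
    have ey: "\<eta> y \<in> Ar C" "Dom C (\<eta> y) = y" "cat_iso C (\<eta> y)" using eta y unfolding nat_iso_def by auto
    then obtain b where b: "b \<in> Ar C" "Dom C b = Cod C (\<eta> y)" "Cod C b = y" "Cmp C b (\<eta> y) = Idt C y"
      unfolding cat_iso_def by auto
    have "a = Cmp C b (Cmp C (\<eta> y) a)"
      using a b ey by (simp add: C.assoc y_def)
    also have "\<dots> = Cmp C b (Cmp C (\<eta> y) a')" using n1 n2 e by simp
    also have "\<dots> = a'" using a' b ey e by (simp add: C.assoc y_def)
    finally show "a = a'" .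
  qed
qed

lemma equiv_swap:
  assumes "is_functor C D F" "is_functor D C K" "nat_iso C C fid (fcomp F K) \<eta>" "nat_iso D D fid (fcomp K F) \<epsilon>"
  shows "cat_equivalence C D F" "cat_equivalence D C K"
  using assms unfolding cat_equivalence_def by blast+

lemma iso_inv: assumes "catl C" "cat_iso C e"
  obtains b where "b \<in> Ar C" "Dom C b = Cod C e" "Cod C b = Dom C e" "Cmp C b e = Idt C (Dom C e)"
     "Cmp C e b = Idt C (Cod C e)" "cat_iso C b"
proof -
  from assms(2) obtain b where b: "b \<in> Ar C" "Dom C b = Cod C e" "Cod C b = Dom C e" "Cmp C b e = Idt C (Dom C e)"
     "Cmp C e b = Idt C (Cod C e)" unfolding cat_iso_def by blast
  have "cat_iso C b" unfolding cat_iso_def using b assms(2) unfolding cat_iso_def by auto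
  then show ?thesis using that b by blast
qed

lemma equiv_full:
  assumes "cat_equivalence C D F" shows "full C D F"
proof -
  obtain K \<eta> \<epsilon> where F: "is_functor C D F" and K: "is_functor D C K"
    and eta: "nat_iso C C fid (fcomp F K) \<eta>" and eps: "nat_iso D D fid (fcomp K F) \<epsilon>"
    using assms unfolding cat_equivalence_def by blast
  interpret ftrl C D F using F by unfold_locales
  interpret K: ftrl D C K using K by unfold_locales
  have Kf: "faithful D C K" using equiv_faithful equiv_swap(2)[OF F K eta eps] by blast
  show ?thesis unfolding full_def
  proof (intro ballI impI)
    fix x y b assume x: "x \<in> Ob C" and y: "y \<in> Ob C" and b: "b \<in> Ar D" and bd: "Dom D b = FO F x \<and> Cod D b = FO F y"
    have ex: "\<eta> x \<in> Ar C" "Dom C (\<eta> x) = x" "Cod C (\<eta> x) = FO K (FO F x)" "cat_iso C (\<eta> x)"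
      using eta x unfolding nat_iso_def by auto
    have ey: "\<eta> y \<in> Ar C" "Dom C (\<eta> y) = y" "Cod C (\<eta> y) = FO K (FO F y)" "cat_iso C (\<eta> y)"
      using eta y unfolding nat_iso_def by auto
    obtain iy where iy: "iy \<in> Ar C" "Dom C iy = FO K (FO F y)" "Cod C iy = y" "Cmp C iy (\<eta> y) = Idt C y"
       "Cmp C (\<eta> y) iy = Idt C (FO K (FO F y))" using iso_inv[OF C.catl_axioms ey(4)] ey by metis
    obtain ix where ix: "ix \<in> Ar C" "Dom C ix = FO K (FO F x)" "Cod C ix = x" "Cmp C ix (\<eta> x) = Idt C x"
       "Cmp C (\<eta> x) ix = Idt C (FO K (FO F x))" using iso_inv[OF C.catl_axioms ex(4)] ex by metis
    have Kb: "FA K b \<in> Ar C" "Dom C (FA K b) = FO K (FO F x)" "Cod C (FA K b) = FO K (FO F y)" using b bd by auto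
    define a where "a = Cmp C iy (Cmp C (FA K b) (\<eta> x))"
    have a: "a \<in> Ar C" "Dom C a = x" "Cod C a = y" unfolding a_def using Kb ex iy by auto
    have Fa: "FA F a \<in> Ar D" "Dom D (FA F a) = FO F x" "Cod D (FA F a) = FO F y" using a by auto
    have nat: "Cmp C (\<eta> y) a = Cmp C (FA K (FA F a)) (\<eta> x)" using eta a unfolding nat_iso_def by force
    have "Cmp C (\<eta> y) a = Cmp C (Cmp C (\<eta> y) iy) (Cmp C (FA K b) (\<eta> x))"
      unfolding a_def using Kb ex iy ey by (simp add: C.assoc)
    also have "\<dots> = Cmp C (FA K b) (\<eta> x)" using iy Kb ex by simp
    finally have e1: "Cmp C (FA K (FA F a)) (\<eta> x) = Cmp C (FA K b) (\<eta> x)" using nat by simp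
    have KFa: "FA K (FA F a) \<in> Ar C" "Dom C (FA K (FA F a)) = FO K (FO F x)" using Fa by auto
    have "FA K (FA F a) = Cmp C (Cmp C (FA K (FA F a)) (\<eta> x)) ix"
      using KFa ex ix by (simp add: C.assoc[symmetric])
    also have "\<dots> = Cmp C (Cmp C (FA K b) (\<eta> x)) ix" using e1 by simp
    also have "\<dots> = FA K b" using Kb ex ix by (simp add: C.assoc[symmetric])
    finally have "FA K (FA F a) = FA K b" .
    then have "FA F a = b" using Kf Fa b bd unfolding faithful_def by auto
    then show "\<exists>a\<in>Ar C. Dom C a = x \<and> Cod C a = y \<and> FA F a = b" using a by blast
  qed
qed

lemma equiv_esurj:
  assumes "cat_equivalence C D F" shows "esurj C D F"
proof -
  obtain K \<eta> \<epsilon> where F: "is_functor C D F" and K: "is_functor D C K"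
    and eps: "nat_iso D D fid (fcomp K F) \<epsilon>"
    using assms unfolding cat_equivalence_def by blast
  interpret ftrl C D F using F by unfold_locales
  interpret K: ftrl D C K using K by unfold_locales
  show ?thesis unfolding esurj_def
  proof
    fix y assume y: "y \<in> Ob D"
    have e: "\<epsilon> y \<in> Ar D" "Dom D (\<epsilon> y) = y" "Cod D (\<epsilon> y) = FO F (FO K y)" "cat_iso D (\<epsilon> y)"
      using eps y unfolding nat_iso_def by auto
    obtain b where "cat_iso D b" "Dom D b = FO F (FO K y)" "Cod D b = y"
      using iso_inv[OF D.catl_axioms e(4)] e by metis
    then show "\<exists>x\<in>Ob C. \<exists>b. cat_iso D b \<and> Dom D b = FO F x \<and> Cod D b = y" using y by auto
  qed
qed


lemma ff_es_equiv:
  assumes F: "is_functor C D F" and fu: "full C D F" and fa: "faithful C D F" and es: "esurj C D F"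
  shows "cat_equivalence C D F"
proof -
  interpret ftrl C D F using F by unfold_locales
  have fD: "a = a'" if "a \<in> Ar C" "a' \<in> Ar C" "Dom C a = Dom C a'" "Cod C a = Cod C a'" "FA F a = FA F a'" for a a'
    using fa that unfolding faithful_def by blast
  have fuD: "\<exists>a. a \<in> Ar C \<and> Dom C a = x \<and> Cod C a = y \<and> FA F a = b"
    if "x \<in> Ob C" "y \<in> Ob C" "b \<in> Ar D" "Dom D b = FO F x" "Cod D b = FO F y" for x y b
    using fu that unfolding full_def by blast
  have "\<forall>y\<in>Ob D. \<exists>p. fst p \<in> Ob C \<and> fst (snd p) \<in> Ar D \<and> Dom D (fst (snd p)) = FO F (fst p) \<and> Cod D (fst (snd p)) = y
     \<and> snd (snd p) \<in> Ar D \<and> Dom D (snd (snd p)) = y \<and> Cod D (snd (snd p)) = FO F (fst p)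
     \<and> Cmp D (snd (snd p)) (fst (snd p)) = Idt D (FO F (fst p)) \<and> Cmp D (fst (snd p)) (snd (snd p)) = Idt D y" (is "\<forall>y\<in>Ob D. \<exists>p. ?P y p")
  proof
    fix y assume y: "y \<in> Ob D"
    then obtain x b where "x \<in> Ob C" "cat_iso D b" "Dom D b = FO F x" "Cod D b = y" using es unfolding esurj_def by blast
    then obtain b' where "b \<in> Ar D" "b' \<in> Ar D" "Dom D b' = y" "Cod D b' = FO F x" "Cmp D b' b = Idt D (FO F x)" "Cmp D b b' = Idt D y"
      unfolding cat_iso_def by auto
    then show "\<exists>p. ?P y p" using \<open>x \<in> Ob C\<close> \<open>Dom D b = FO F x\<close> \<open>Cod D b = y\<close>
      by (intro exI[of _ "(x,b,b')"]) auto
  qed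
  then obtain p where p: "\<And>y. y \<in> Ob D \<Longrightarrow> fst (p y) \<in> Ob C \<and> fst (snd (p y)) \<in> Ar D \<and> Dom D (fst (snd (p y))) = FO F (fst (p y)) \<and> Cod D (fst (snd (p y))) = y
     \<and> snd (snd (p y)) \<in> Ar D \<and> Dom D (snd (snd (p y))) = y \<and> Cod D (snd (snd (p y))) = FO F (fst (p y))
     \<and> Cmp D (snd (snd (p y))) (fst (snd (p y))) = Idt D (FO F (fst (p y))) \<and> Cmp D (fst (snd (p y))) (snd (snd (p y))) = Idt D y"
    by metis
  define xo where "xo y = fst (p y)" for y
  define e where "e y = fst (snd (p y))" for y
  define e' where "e' y = snd (snd (p y))" for y
  have xo: "y \<in> Ob D \<Longrightarrow> xo y \<in> Ob C" for y using p unfolding xo_def by blast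
  have e: "y \<in> Ob D \<Longrightarrow> e y \<in> Ar D" "y \<in> Ob D \<Longrightarrow> Dom D (e y) = FO F (xo y)" "y \<in> Ob D \<Longrightarrow> Cod D (e y) = y" for y
    using p unfolding xo_def e_def by blast+
  have e': "y \<in> Ob D \<Longrightarrow> e' y \<in> Ar D" "y \<in> Ob D \<Longrightarrow> Dom D (e' y) = y" "y \<in> Ob D \<Longrightarrow> Cod D (e' y) = FO F (xo y)" for y
    using p unfolding xo_def e'_def by blast+
  have ee: "y \<in> Ob D \<Longrightarrow> Cmp D (e' y) (e y) = Idt D (FO F (xo y))" "y \<in> Ob D \<Longrightarrow> Cmp D (e y) (e' y) = Idt D y" for y
    using p unfolding xo_def e_def e'_def by blast+
  define Kb where "Kb b = Cmp D (e' (Cod D b)) (Cmp D b (e (Dom D b)))" for b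
  have Kb: "b \<in> Ar D \<Longrightarrow> Kb b \<in> Ar D \<and> Dom D (Kb b) = FO F (xo (Dom D b)) \<and> Cod D (Kb b) = FO F (xo (Cod D b))" for b
    unfolding Kb_def using e e' by simp
  define K where "K = \<lparr>FO = xo, FA = (\<lambda>b. SOME a. a \<in> Ar C \<and> Dom C a = xo (Dom D b) \<and> Cod C a = xo (Cod D b) \<and> FA F a = Kb b)\<rparr>"
  have K: "b \<in> Ar D \<Longrightarrow> FA K b \<in> Ar C \<and> Dom C (FA K b) = xo (Dom D b) \<and> Cod C (FA K b) = xo (Cod D b) \<and> FA F (FA K b) = Kb b" for b
    unfolding K_def ftr.simps
    by (rule someI_ex, rule fuD) (use Kb xo in auto)
  have KO: "FO K y = xo y" for y unfolding K_def by simp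
  have Kf: "is_functor D C K" unfolding is_functor_def
  proof (intro conjI ballI impI)
    show "is_cat D" "is_cat C" using D.iscat C.iscat by auto
    show "FO K y \<in> Ob C" if "y \<in> Ob D" for y using xo that KO by simp
    show "FA K b \<in> Ar C" "Dom C (FA K b) = FO K (Dom D b)" "Cod C (FA K b) = FO K (Cod D b)" if "b \<in> Ar D" for b
      using K that KO by auto
    show "FA K (Idt D y) = Idt C (FO K y)" if y: "y \<in> Ob D" for y
    proof (rule fD)
      show "FA K (Idt D y) \<in> Ar C" "Idt C (FO K y) \<in> Ar C" "Dom C (FA K (Idt D y)) = Dom C (Idt C (FO K y))"
        "Cod C (FA K (Idt D y)) = Cod C (Idt C (FO K y))" using K[of "Idt D y"] y xo KO by auto
      have "FA F (FA K (Idt D y)) = Kb (Idt D y)" using K y by simp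
      also have "\<dots> = Cmp D (e' y) (e y)" unfolding Kb_def using y e e' by simp
      also have "\<dots> = FA F (Idt C (FO K y))" using ee y xo KO by simp
      finally show "FA F (FA K (Idt D y)) = FA F (Idt C (FO K y))" .
    qed
    show "FA K (Cmp D c b) = Cmp C (FA K c) (FA K b)" if b: "b \<in> Ar D" and c: "c \<in> Ar D" and bc: "Cod D b = Dom D c" for b c
    proof (rule fD)
      have Kb': "FA K b \<in> Ar C" "Dom C (FA K b) = xo (Dom D b)" "Cod C (FA K b) = xo (Cod D b)" "FA F (FA K b) = Kb b" using K b by auto
      have Kc': "FA K c \<in> Ar C" "Dom C (FA K c) = xo (Dom D c)" "Cod C (FA K c) = xo (Cod D c)" "FA F (FA K c) = Kb c" using K c by auto
      have Kcb: "FA K (Cmp D c b) \<in> Ar C" "Dom C (FA K (Cmp D c b)) = xo (Dom D b)" "Cod C (FA K (Cmp D c b)) = xo (Cod D c)"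
          "FA F (FA K (Cmp D c b)) = Kb (Cmp D c b)" using K[of "Cmp D c b"] b c bc by auto
      show "FA K (Cmp D c b) \<in> Ar C" "Cmp C (FA K c) (FA K b) \<in> Ar C"
        "Dom C (FA K (Cmp D c b)) = Dom C (Cmp C (FA K c) (FA K b))" "Cod C (FA K (Cmp D c b)) = Cod C (Cmp C (FA K c) (FA K b))"
        using Kb' Kc' Kcb bc by auto
      have x: "Dom D b \<in> Ob D" and y: "Cod D b \<in> Ob D" and z: "Cod D c \<in> Ob D" using b c by auto
      have "FA F (Cmp C (FA K c) (FA K b)) = Cmp D (Kb c) (Kb b)" using Kb' Kc' bc by simp
      also have "\<dots> = Cmp D (e' (Cod D c)) (Cmp D c (Cmp D (e (Cod D b)) (Cmp D (e' (Cod D b)) (Cmp D b (e (Dom D b))))))"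
        unfolding Kb_def using b c bc e[OF x] e[OF y] e'[OF y] e'[OF z] by (simp add: D.assoc)
      also have "Cmp D (e (Cod D b)) (Cmp D (e' (Cod D b)) (Cmp D b (e (Dom D b)))) = Cmp D b (e (Dom D b))"
        by (rule D.cancel) (use b e[OF x] e[OF y] e'[OF y] ee[OF y] in auto)
      also have "Cmp D (e' (Cod D c)) (Cmp D c (Cmp D b (e (Dom D b)))) = Kb (Cmp D c b)"
        unfolding Kb_def using b c bc e[OF x] e'[OF z] by (simp add: D.assoc)
      finally show "FA F (FA K (Cmp D c b)) = FA F (Cmp C (FA K c) (FA K b))" using Kcb by simp
    qed
  qed
  interpret K: ftrl D C K using Kf by unfold_locales
  have epsn: "nat_iso D D fid (fcomp K F) e'"
    unfolding nat_iso_def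
  proof (intro conjI ballI)
    fix y assume y: "y \<in> Ob D"
    show "e' y \<in> Ar D" "Dom D (e' y) = FO fid y" "Cod D (e' y) = FO (fcomp K F) y" using e' y KO by auto
    show "cat_iso D (e' y)" unfolding cat_iso_def using e' e ee y by (intro conjI bexI[of _ "e y"]) auto
  next
    fix b assume b: "b \<in> Ar D"
    have x: "Dom D b \<in> Ob D" and y: "Cod D b \<in> Ob D" using b by auto
    have "Cmp D (FA (fcomp K F) b) (e' (Dom D b)) = Cmp D (Kb b) (e' (Dom D b))" using K b by simp
    also have "\<dots> = Cmp D (e' (Cod D b)) (Cmp D b (Cmp D (e (Dom D b)) (e' (Dom D b))))"
      unfolding Kb_def using b e[OF x] e'[OF x] e'[OF y] by (simp add: D.assoc)
    also have "\<dots> = Cmp D (e' (Cod D b)) b" using ee[OF x] b by simp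
    finally show "Cmp D (e' (Cod D b)) (FA fid b) = Cmp D (FA (fcomp K F) b) (e' (Dom D b))" by simp
  qed
  define eta where "eta x = (SOME a. a \<in> Ar C \<and> Dom C a = x \<and> Cod C a = xo (FO F x) \<and> FA F a = e' (FO F x))" for x
  have eta: "x \<in> Ob C \<Longrightarrow> eta x \<in> Ar C \<and> Dom C (eta x) = x \<and> Cod C (eta x) = xo (FO F x) \<and> FA F (eta x) = e' (FO F x)" for x
    unfolding eta_def by (rule someI_ex, rule fuD) (use xo e' in auto)
  have etan: "nat_iso C C fid (fcomp F K) eta"
    unfolding nat_iso_def
  proof (intro conjI ballI)
    fix x assume x: "x \<in> Ob C"
    have Fx: "FO F x \<in> Ob D" using x by simp
    show "eta x \<in> Ar C" "Dom C (eta x) = FO fid x" "Cod C (eta x) = FO (fcomp F K) x" using eta[OF x] KO by auto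
    obtain a' where a': "a' \<in> Ar C" "Dom C a' = xo (FO F x)" "Cod C a' = x" "FA F a' = e (FO F x)"
      using fuD[of "xo (FO F x)" x "e (FO F x)"] xo[OF Fx] x e[OF Fx] by auto
    have h1: "Cmp C a' (eta x) = Idt C (Dom C (eta x))"
      by (rule fD) (use a' eta[OF x] x ee[OF Fx] in auto)
    have h2: "Cmp C (eta x) a' = Idt C (Cod C (eta x))"
      by (rule fD) (use a' eta[OF x] xo[OF Fx] ee[OF Fx] in auto)
    show "cat_iso C (eta x)" unfolding cat_iso_def using a' eta[OF x] h1 h2 by auto
  next
    fix a assume a: "a \<in> Ar C"
    have x: "Dom C a \<in> Ob C" and y: "Cod C a \<in> Ob C" using a by auto
    have Fx: "FO F (Dom C a) \<in> Ob D" and Fy: "FO F (Cod C a) \<in> Ob D" using x y by auto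
    have KFa: "FA K (FA F a) \<in> Ar C" "Dom C (FA K (FA F a)) = xo (FO F (Dom C a))" "Cod C (FA K (FA F a)) = xo (FO F (Cod C a))"
      "FA F (FA K (FA F a)) = Kb (FA F a)" using K[of "FA F a"] a by auto
    show "Cmp C (eta (Cod C a)) (FA fid a) = Cmp C (FA (fcomp F K) a) (eta (Dom C a))"
    proof (rule fD)
      show "Cmp C (eta (Cod C a)) (FA fid a) \<in> Ar C" "Cmp C (FA (fcomp F K) a) (eta (Dom C a)) \<in> Ar C"
        "Dom C (Cmp C (eta (Cod C a)) (FA fid a)) = Dom C (Cmp C (FA (fcomp F K) a) (eta (Dom C a)))"
        "Cod C (Cmp C (eta (Cod C a)) (FA fid a)) = Cod C (Cmp C (FA (fcomp F K) a) (eta (Dom C a)))"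
        using a KFa eta[OF x] eta[OF y] by auto
      have "FA F (Cmp C (FA (fcomp F K) a) (eta (Dom C a))) = Cmp D (Kb (FA F a)) (e' (FO F (Dom C a)))"
        using a KFa eta[OF x] by simp
      also have "\<dots> = Cmp D (e' (FO F (Cod C a))) (Cmp D (FA F a) (Cmp D (e (FO F (Dom C a))) (e' (FO F (Dom C a)))))"
        unfolding Kb_def using a e[OF Fx] e'[OF Fx] e'[OF Fy] by (simp add: D.assoc)
      also have "\<dots> = Cmp D (e' (FO F (Cod C a))) (FA F a)" using ee[OF Fx] a by simp
      also have "\<dots> = FA F (Cmp C (eta (Cod C a)) (FA fid a))" using a eta[OF y] by simp
      finally show "FA F (Cmp C (eta (Cod C a)) (FA fid a)) = FA F (Cmp C (FA (fcomp F K) a) (eta (Dom C a)))" by simp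
    qed
  qed
  show ?thesis unfolding cat_equivalence_def using F Kf etan epsn by blast
qed




lemma prod_cat_simps[simp]:
  "Ob (prod_cat C D) = Ob C \<times> Ob D" "Ar (prod_cat C D) = Ar C \<times> Ar D"
  "Dom (prod_cat C D) (a,b) = (Dom C a, Dom D b)" "Cod (prod_cat C D) (a,b) = (Cod C a, Cod D b)"
  "Idt (prod_cat C D) (x,y) = (Idt C x, Idt D y)" "Cmp (prod_cat C D) (a,b) (a',b') = (Cmp C a a', Cmp D b b')"
  by (simp_all add: prod_cat_def)
lemma disc_simps[simp]: "Ob (disc_cat G) = carrier G" "Ar (disc_cat G) = carrier G" "Dom (disc_cat G) g = g"
  "Cod (disc_cat G) g = g" "Idt (disc_cat G) g = g" "Cmp (disc_cat G) g h = g"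
  by (simp_all add: disc_cat_def)
lemma tensor_simps[simp]: "FO (prod_tensor T1 T2) ((a,b),(c,d)) = (FO T1 (a,c), FO T2 (b,d))"
  "FA (prod_tensor T1 T2) ((a,b),(c,d)) = (FA T1 (a,c), FA T2 (b,d))"
  "FO (disc_tensor G) (g,h) = g \<otimes>\<^bsub>G\<^esub> h" "FA (disc_tensor G) (g,h) = g \<otimes>\<^bsub>G\<^esub> h"
  by (simp_all add: prod_tensor_def disc_tensor_def)

lemma fix_cat_simps[simp]:
  "Ob (fix_cat M C A H) = {x\<in>Ob C. \<forall>h\<in>H. FO A (h,x) = x}"
  "Ar (fix_cat M C A H) = {f\<in>Ar C. \<forall>h\<in>H. FA A (Idt M h, f) = f}"
  "Dom (fix_cat M C A H) = Dom C" "Cod (fix_cat M C A H) = Cod C"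
  "Idt (fix_cat M C A H) = Idt C" "Cmp (fix_cat M C A H) = Cmp C"
  by (simp_all add: fix_cat_def)

lemma subcat:
  assumes "is_cat C" "\<forall>f\<in>Ar C'. Dom C f \<in> Ob C' \<and> Cod C f \<in> Ob C'" "\<forall>x\<in>Ob C'. Idt C x \<in> Ar C'"
    "\<forall>f\<in>Ar C'. \<forall>g\<in>Ar C'. Cod C f = Dom C g \<longrightarrow> Cmp C g f \<in> Ar C'"
    "Ob C' \<subseteq> Ob C" "Ar C' \<subseteq> Ar C" "Dom C' = Dom C" "Cod C' = Cod C" "Idt C' = Idt C" "Cmp C' = Cmp C"
  shows "is_cat C'"
  using assms unfolding is_cat_def by (simp add: subset_iff)

lemma subftr:
  assumes "is_functor C D F" "is_cat C'" "is_cat D'"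
    "Ob C' \<subseteq> Ob C" "Ar C' \<subseteq> Ar C" "Dom C' = Dom C" "Cod C' = Cod C" "Idt C' = Idt C" "Cmp C' = Cmp C"
    "Ob D' \<subseteq> Ob D" "Ar D' \<subseteq> Ar D" "Dom D' = Dom D" "Cod D' = Cod D" "Idt D' = Idt D" "Cmp D' = Cmp D"
    "\<forall>x\<in>Ob C'. FO F x \<in> Ob D'" "\<forall>f\<in>Ar C'. FA F f \<in> Ar D'"
  shows "is_functor C' D' F"
  using assms unfolding is_functor_def by (simp add: subset_iff)

locale qs =
  fixes M :: "('mo,'ma) cat" and T :: "('mo \<times> 'mo, 'ma \<times> 'ma, 'mo, 'ma) ftr" and u :: 'mo
    and G :: "'g monoid" and C :: "('c,'ca) cat"
    and A :: "(('mo \<times> 'g) \<times> 'c, ('ma \<times> 'g) \<times> 'ca, 'c, 'ca) ftr"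
  assumes sm: "strict_monoidal M T u" and grp: "group G"
    and sa: "strict_action (prod_cat M (disc_cat G)) (prod_tensor T (disc_tensor G)) (u, \<one>\<^bsub>G\<^esub>) C A"
    and fr: "free_G_action u G C A"
begin

sublocale G: group G by (rule grp)
sublocale T: ftrl "prod_cat M M" M T using sm unfolding strict_monoidal_def by (simp add: ftrl_def)
sublocale A: ftrl "prod_cat (prod_cat M (disc_cat G)) C" C A using sa unfolding strict_action_def by (simp add: ftrl_def)


lemma u_ob[simp]: "u \<in> Ob M" using sm unfolding strict_monoidal_def by blast
lemma T_ob[simp]: "h \<in> Ob M \<Longrightarrow> k \<in> Ob M \<Longrightarrow> FO T (h,k) \<in> Ob M" using T.F_ob by simp
lemma T_unit[simp]: "x \<in> Ob M \<Longrightarrow> FO T (u,x) = x" "x \<in> Ob M \<Longrightarrow> FO T (x,u) = x"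
  "a \<in> Ar M \<Longrightarrow> FA T (Idt M u, a) = a" "a \<in> Ar M \<Longrightarrow> FA T (a, Idt M u) = a"
  using sm unfolding strict_monoidal_def by blast+
lemma T_idt: "h \<in> Ob M \<Longrightarrow> k \<in> Ob M \<Longrightarrow> FA T (Idt M h, Idt M k) = Idt M (FO T (h,k))"
  using T.F_id[of "(h,k)"] by simp

lemma A_ob[simp]: "m \<in> Ob M \<Longrightarrow> g \<in> carrier G \<Longrightarrow> x \<in> Ob C \<Longrightarrow> FO A ((m,g),x) \<in> Ob C"
  using A.F_ob[of "((m,g),x)"] by simp
lemma A_ar[simp]: "a \<in> Ar M \<Longrightarrow> g \<in> carrier G \<Longrightarrow> s \<in> Ar C \<Longrightarrow> FA A ((a,g),s) \<in> Ar C"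
  using A.F_ar[of "((a,g),s)"] by simp
lemma A_dom[simp]: "a \<in> Ar M \<Longrightarrow> g \<in> carrier G \<Longrightarrow> s \<in> Ar C \<Longrightarrow> Dom C (FA A ((a,g),s)) = FO A ((Dom M a, g), Dom C s)"
  using A.F_dom[of "((a,g),s)"] by simp
lemma A_cod[simp]: "a \<in> Ar M \<Longrightarrow> g \<in> carrier G \<Longrightarrow> s \<in> Ar C \<Longrightarrow> Cod C (FA A ((a,g),s)) = FO A ((Cod M a, g), Cod C s)"
  using A.F_cod[of "((a,g),s)"] by simp
lemma A_id: "m \<in> Ob M \<Longrightarrow> g \<in> carrier G \<Longrightarrow> x \<in> Ob C \<Longrightarrow> FA A ((Idt M m, g), Idt C x) = Idt C (FO A ((m,g),x))"
  using A.F_id[of "((m,g),x)"] by simp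
lemma A_cmp: "a \<in> Ar M \<Longrightarrow> b \<in> Ar M \<Longrightarrow> Cod M a = Dom M b \<Longrightarrow> g \<in> carrier G \<Longrightarrow> s \<in> Ar C \<Longrightarrow> t \<in> Ar C \<Longrightarrow> Cod C s = Dom C t \<Longrightarrow>
  FA A ((Cmp M b a, g), Cmp C t s) = Cmp C (FA A ((b,g),t)) (FA A ((a,g),s))"
  using A.F_cmp[of "((a,g),s)" "((b,g),t)"] by simp
lemma A_mult_ob: "m \<in> Ob M \<Longrightarrow> n \<in> Ob M \<Longrightarrow> g \<in> carrier G \<Longrightarrow> h \<in> carrier G \<Longrightarrow> x \<in> Ob C \<Longrightarrow>
  FO A ((FO T (m,n), g \<otimes>\<^bsub>G\<^esub> h), x) = FO A ((m,g), FO A ((n,h),x))"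
proof -
  assume a: "m \<in> Ob M" "n \<in> Ob M" "g \<in> carrier G" "h \<in> carrier G" "x \<in> Ob C"
  have "\<forall>m\<in>Ob (prod_cat M (disc_cat G)). \<forall>n\<in>Ob (prod_cat M (disc_cat G)). \<forall>x\<in>Ob C.
             FO A (FO (prod_tensor T (disc_tensor G)) (m, n), x) = FO A (m, FO A (n, x))"
    using sa unfolding strict_action_def by blast
  then have "FO A (FO (prod_tensor T (disc_tensor G)) ((m,g), (n,h)), x) = FO A ((m,g), FO A ((n,h), x))"
    using a by simp
  then show ?thesis by (simp add: prod_tensor_def disc_tensor_def)
qed
lemma A_mult_ar: "a \<in> Ar M \<Longrightarrow> b \<in> Ar M \<Longrightarrow> g \<in> carrier G \<Longrightarrow> h \<in> carrier G \<Longrightarrow> s \<in> Ar C \<Longrightarrow>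
  FA A ((FA T (a,b), g \<otimes>\<^bsub>G\<^esub> h), s) = FA A ((a,g), FA A ((b,h),s))"
proof -
  assume a: "a \<in> Ar M" "b \<in> Ar M" "g \<in> carrier G" "h \<in> carrier G" "s \<in> Ar C"
  have "\<forall>a\<in>Ar (prod_cat M (disc_cat G)). \<forall>b\<in>Ar (prod_cat M (disc_cat G)). \<forall>f\<in>Ar C.
             FA A (FA (prod_tensor T (disc_tensor G)) (a, b), f) = FA A (a, FA A (b, f))"
    using sa unfolding strict_action_def by blast
  then have "FA A (FA (prod_tensor T (disc_tensor G)) ((a,g), (b,h)), s) = FA A ((a,g), FA A ((b,h), s))"
    using a by simp
  then show ?thesis by (simp add: prod_tensor_def disc_tensor_def)
qed
lemma A_unit[simp]: "x \<in> Ob C \<Longrightarrow> FO A ((u,\<one>\<^bsub>G\<^esub>),x) = x" "s \<in> Ar C \<Longrightarrow> FA A ((Idt M u, \<one>\<^bsub>G\<^esub>), s) = s"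
  using sa unfolding strict_action_def by auto


abbreviation "gx g x \<equiv> FO A ((u,g),x)"
abbreviation "gs g s \<equiv> FA A ((Idt M u, g), s)"
abbreviation "mx m x \<equiv> FO A ((m,\<one>\<^bsub>G\<^esub>),x)"
abbreviation "ma a s \<equiv> FA A ((a,\<one>\<^bsub>G\<^esub>),s)"
abbreviation "oo x \<equiv> orb_o u G A x"
abbreviation "oa s \<equiv> orb_a M u G A s"

lemma iu[simp]: "Idt M u \<in> Ar M" "Dom M (Idt M u) = u" "Cod M (Idt M u) = u" by simp_all
lemma iuu[simp]: "Cmp M (Idt M u) (Idt M u) = Idt M u" by simp

lemma gs_dom[simp]: "g \<in> carrier G \<Longrightarrow> s \<in> Ar C \<Longrightarrow> Dom C (gs g s) = gx g (Dom C s)" by simp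
lemma gs_cod[simp]: "g \<in> carrier G \<Longrightarrow> s \<in> Ar C \<Longrightarrow> Cod C (gs g s) = gx g (Cod C s)" by simp
lemma gx_mult: "g \<in> carrier G \<Longrightarrow> h \<in> carrier G \<Longrightarrow> x \<in> Ob C \<Longrightarrow> gx g (gx h x) = gx (g \<otimes>\<^bsub>G\<^esub> h) x"
  using A_mult_ob[of u u g h x] by simp
lemma gs_mult: "g \<in> carrier G \<Longrightarrow> h \<in> carrier G \<Longrightarrow> s \<in> Ar C \<Longrightarrow> gs g (gs h s) = gs (g \<otimes>\<^bsub>G\<^esub> h) s"
  using A_mult_ar[of "Idt M u" "Idt M u" g h s] by simp
lemma gs_cmp: "g \<in> carrier G \<Longrightarrow> s \<in> Ar C \<Longrightarrow> t \<in> Ar C \<Longrightarrow> Cod C s = Dom C t \<Longrightarrow> gs g (Cmp C t s) = Cmp C (gs g t) (gs g s)"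
  using A_cmp[of "Idt M u" "Idt M u" g s t] by simp
lemma gs_id: "g \<in> carrier G \<Longrightarrow> x \<in> Ob C \<Longrightarrow> gs g (Idt C x) = Idt C (gx g x)"
  using A_id[of u g x] by simp
lemma free: "x \<in> Ob C \<Longrightarrow> g \<in> carrier G \<Longrightarrow> gx g x = x \<Longrightarrow> g = \<one>\<^bsub>G\<^esub>"
  using fr unfolding free_G_action_def by blast
lemma free_eq: assumes "x \<in> Ob C" "g \<in> carrier G" "h \<in> carrier G" "gx g x = gx h x" shows "g = h"
proof -
  have "x = gx (inv\<^bsub>G\<^esub> h) (gx h x)" using assms(1-3) by (simp add: gx_mult)
  also have "\<dots> = gx (inv\<^bsub>G\<^esub> h) (gx g x)" by (simp only: assms(4))
  also have "\<dots> = gx (inv\<^bsub>G\<^esub> h \<otimes>\<^bsub>G\<^esub> g) x" using assms(1-3) by (simp add: gx_mult)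
  finally have "inv\<^bsub>G\<^esub> h \<otimes>\<^bsub>G\<^esub> g = \<one>\<^bsub>G\<^esub>" using free assms by simp
  then show ?thesis using assms by (metis G.inv_solve_left' G.one_closed G.r_one)
qed
lemma comm_ob: "m \<in> Ob M \<Longrightarrow> g \<in> carrier G \<Longrightarrow> x \<in> Ob C \<Longrightarrow> mx m (gx g x) = FO A ((m,g),x)"
  "m \<in> Ob M \<Longrightarrow> g \<in> carrier G \<Longrightarrow> x \<in> Ob C \<Longrightarrow> gx g (mx m x) = FO A ((m,g),x)"
  using A_mult_ob[of m u "\<one>\<^bsub>G\<^esub>" g x] A_mult_ob[of u m g "\<one>\<^bsub>G\<^esub>" x] by simp_all
lemma comm_ar: "a \<in> Ar M \<Longrightarrow> g \<in> carrier G \<Longrightarrow> s \<in> Ar C \<Longrightarrow> ma a (gs g s) = FA A ((a,g),s)"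
  "a \<in> Ar M \<Longrightarrow> g \<in> carrier G \<Longrightarrow> s \<in> Ar C \<Longrightarrow> gs g (ma a s) = FA A ((a,g),s)"
  using A_mult_ar[of a "Idt M u" "\<one>\<^bsub>G\<^esub>" g s] A_mult_ar[of "Idt M u" a g "\<one>\<^bsub>G\<^esub>" s] by simp_all
lemma mx_mult: "h \<in> Ob M \<Longrightarrow> k \<in> Ob M \<Longrightarrow> x \<in> Ob C \<Longrightarrow> mx h (mx k x) = mx (FO T (h,k)) x"
  using A_mult_ob[of h k "\<one>\<^bsub>G\<^esub>" "\<one>\<^bsub>G\<^esub>" x] by simp
lemma ma_mult: "h \<in> Ob M \<Longrightarrow> k \<in> Ob M \<Longrightarrow> s \<in> Ar C \<Longrightarrow> ma (Idt M h) (ma (Idt M k) s) = ma (Idt M (FO T (h,k))) s"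
  using A_mult_ar[of "Idt M h" "Idt M k" "\<one>\<^bsub>G\<^esub>" "\<one>\<^bsub>G\<^esub>" s] by (simp add: T_idt)

lemma mem_oo: "y \<in> oo x \<longleftrightarrow> (\<exists>g\<in>carrier G. y = gx g x)" unfolding orb_o_def by auto
lemma mem_oa: "t \<in> oa s \<longleftrightarrow> (\<exists>g\<in>carrier G. t = gs g s)" unfolding orb_a_def by auto
lemma oo_self: "x \<in> Ob C \<Longrightarrow> x \<in> oo x" unfolding mem_oo by (force intro: bexI[of _ "\<one>\<^bsub>G\<^esub>"])
lemma oa_self: "s \<in> Ar C \<Longrightarrow> s \<in> oa s" unfolding mem_oa by (force intro: bexI[of _ "\<one>\<^bsub>G\<^esub>"])
lemma oo_sub: "x \<in> Ob C \<Longrightarrow> oo x \<subseteq> Ob C" unfolding orb_o_def by auto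
lemma oa_sub: "s \<in> Ar C \<Longrightarrow> oa s \<subseteq> Ar C" unfolding orb_a_def by auto
lemma oo_eq: assumes "x \<in> Ob C" "y \<in> oo x" shows "oo y = oo x"
proof -
  obtain h where h: "h \<in> carrier G" "y = gx h x" using assms unfolding mem_oo by auto
  show ?thesis
  proof (intro Set.set_eqI iffI)
    fix z assume "z \<in> oo y" then obtain g where g: "g \<in> carrier G" "z = gx g (gx h x)" using h unfolding mem_oo by auto
    then show "z \<in> oo x" unfolding mem_oo using h assms by (intro bexI[of _ "g \<otimes>\<^bsub>G\<^esub> h"]) (simp_all add: gx_mult)
  next
    fix z assume "z \<in> oo x" then obtain g where g: "g \<in> carrier G" "z = gx g x" unfolding mem_oo by auto
    have "z = gx (g \<otimes>\<^bsub>G\<^esub> inv\<^bsub>G\<^esub> h) (gx h x)" using g h assms by (simp add: gx_mult G.m_assoc)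
    then show "z \<in> oo y" unfolding mem_oo h(2) using g h by auto
  qed
qed
lemma oa_eq: assumes "s \<in> Ar C" "t \<in> oa s" shows "oa t = oa s"
proof -
  obtain h where h: "h \<in> carrier G" "t = gs h s" using assms unfolding mem_oa by auto
  show ?thesis
  proof (intro Set.set_eqI iffI)
    fix z assume "z \<in> oa t" then obtain g where g: "g \<in> carrier G" "z = gs g (gs h s)" using h unfolding mem_oa by auto
    then show "z \<in> oa s" unfolding mem_oa using h assms by (intro bexI[of _ "g \<otimes>\<^bsub>G\<^esub> h"]) (simp_all add: gs_mult)
  next
    fix z assume "z \<in> oa s" then obtain g where g: "g \<in> carrier G" "z = gs g s" unfolding mem_oa by auto
    have "z = gs (g \<otimes>\<^bsub>G\<^esub> inv\<^bsub>G\<^esub> h) (gs h s)" using g h assms by (simp add: gs_mult G.m_assoc)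
    then show "z \<in> oa t" unfolding mem_oa h(2) using g h by auto
  qed
qed
lemma oo_iff: "x \<in> Ob C \<Longrightarrow> y \<in> Ob C \<Longrightarrow> oo x = oo y \<longleftrightarrow> y \<in> oo x"
  using oo_eq oo_self by metis
lemma oa_iff: "s \<in> Ar C \<Longrightarrow> t \<in> Ar C \<Longrightarrow> oa s = oa t \<longleftrightarrow> t \<in> oa s"
  using oa_eq oa_self by metis
lemma dom_oa: "s \<in> Ar C \<Longrightarrow> Dom C ` oa s = oo (Dom C s)"
  unfolding orb_a_def orb_o_def by (auto simp: image_iff) (metis gs_dom)
lemma cod_oa: "s \<in> Ar C \<Longrightarrow> Cod C ` oa s = oo (Cod C s)"
  unfolding orb_a_def orb_o_def by (auto simp: image_iff) (metis gs_cod)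
lemma idt_oo: "x \<in> Ob C \<Longrightarrow> Idt C ` oo x = oa (Idt C x)"
  unfolding orb_a_def orb_o_def by (auto simp: image_iff gs_id) (metis gs_id)
lemma cmp_oa: assumes s: "s \<in> Ar C" and t: "t \<in> Ar C" and st: "Cod C s = Dom C t"
  shows "{Cmp C t' s' | t' s'. t' \<in> oa t \<and> s' \<in> oa s \<and> Cod C s' = Dom C t'} = oa (Cmp C t s)"
proof (intro Set.set_eqI iffI)
  fix z assume "z \<in> {Cmp C t' s' | t' s'. t' \<in> oa t \<and> s' \<in> oa s \<and> Cod C s' = Dom C t'}"
  then obtain g h where g: "g \<in> carrier G" "h \<in> carrier G" and z: "z = Cmp C (gs g t) (gs h s)"
    and e: "Cod C (gs h s) = Dom C (gs g t)" unfolding orb_a_def by auto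
  have "gx h (Cod C s) = gx g (Cod C s)" using e g s t st by simp
  then have "h = g" using free_eq g s by (meson A.D.cod_ob)
  then show "z \<in> oa (Cmp C t s)" using z g s t st unfolding mem_oa by (auto simp: gs_cmp)
next
  fix z assume "z \<in> oa (Cmp C t s)"
  then obtain g where g: "g \<in> carrier G" "z = gs g (Cmp C t s)" unfolding orb_a_def by auto
  then show "z \<in> {Cmp C t' s' | t' s'. t' \<in> oa t \<and> s' \<in> oa s \<and> Cod C s' = Dom C t'}"
  proof (intro CollectI exI conjI)
    show "z = Cmp C (gs g t) (gs g s)" using g s t st by (simp add: gs_cmp)
    show "gs g t \<in> oa t" "gs g s \<in> oa s" using g unfolding mem_oa by auto
    show "Cod C (gs g s) = Dom C (gs g t)" using g s t st by simp
  qed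
qed


abbreviation "Q \<equiv> quot_cat M u G C A"
lemma Q_simps: "Ob Q = oo ` Ob C" "Ar Q = oa ` Ar C" "Dom Q S = Dom C ` S" "Cod Q S = Cod C ` S"
  "Idt Q X = Idt C ` X" "Cmp Q R S = {Cmp C t s | t s. t \<in> R \<and> s \<in> S \<and> Cod C s = Dom C t}"
  by (simp_all add: quot_cat_def)
lemma Q_dom[simp]: "s \<in> Ar C \<Longrightarrow> Dom Q (oa s) = oo (Dom C s)" by (simp add: Q_simps dom_oa)
lemma Q_cod[simp]: "s \<in> Ar C \<Longrightarrow> Cod Q (oa s) = oo (Cod C s)" by (simp add: Q_simps cod_oa)
lemma Q_idt[simp]: "x \<in> Ob C \<Longrightarrow> Idt Q (oo x) = oa (Idt C x)" by (simp add: Q_simps idt_oo)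
lemma Q_cmp[simp]: "s \<in> Ar C \<Longrightarrow> t \<in> Ar C \<Longrightarrow> Cod C s = Dom C t \<Longrightarrow> Cmp Q (oa t) (oa s) = oa (Cmp C t s)"
  by (simp add: Q_simps cmp_oa)
lemma Q_ob_I[simp]: "x \<in> Ob C \<Longrightarrow> oo x \<in> Ob Q" by (simp add: Q_simps)
lemma Q_ar_I[simp]: "s \<in> Ar C \<Longrightarrow> oa s \<in> Ar Q" by (simp add: Q_simps)
lemma Q_obE: "X \<in> Ob Q \<Longrightarrow> x \<in> X \<Longrightarrow> x \<in> Ob C \<and> X = oo x"
  unfolding Q_simps using oo_eq oo_sub by blast
lemma Q_arE: "S \<in> Ar Q \<Longrightarrow> s \<in> S \<Longrightarrow> s \<in> Ar C \<and> S = oa s"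
  unfolding Q_simps using oa_eq oa_sub by blast
lemma Q_ob_ne: "X \<in> Ob Q \<Longrightarrow> \<exists>x. x \<in> X" unfolding Q_simps using oo_self by blast
lemma Q_ar_ne: "S \<in> Ar Q \<Longrightarrow> \<exists>s. s \<in> S" unfolding Q_simps using oa_self by blast
lemma Q_next: assumes "s \<in> Ar C" "R \<in> Ar Q" "oo (Cod C s) = Dom Q R"
  shows "\<exists>t. t \<in> Ar C \<and> R = oa t \<and> Dom C t = Cod C s"
proof -
  have "Cod C s \<in> Dom C ` R" using assms oo_self unfolding Q_simps by (metis A.D.cod_ob)
  then obtain t where "t \<in> R" "Dom C t = Cod C s" by auto
  then show ?thesis using Q_arE assms by metis
qed

lemma Q_cat: "is_cat Q"
  unfolding is_cat_def
proof (intro conjI ballI impI)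
  fix S assume S: "S \<in> Ar Q"
  then obtain s where s: "s \<in> Ar C" "S = oa s" unfolding Q_simps by auto
  show "Dom Q S \<in> Ob Q" "Cod Q S \<in> Ob Q" using s by simp_all
  show "Cmp Q S (Idt Q (Dom Q S)) = S" "Cmp Q (Idt Q (Cod Q S)) S = S" using s by simp_all
next
  fix X assume X: "X \<in> Ob Q"
  then obtain x where x: "x \<in> Ob C" "X = oo x" unfolding Q_simps by auto
  show "Idt Q X \<in> Ar Q" "Dom Q (Idt Q X) = X" "Cod Q (Idt Q X) = X" using x by simp_all
next
  fix S R assume S: "S \<in> Ar Q" and R: "R \<in> Ar Q" and e: "Cod Q S = Dom Q R"
  then obtain s where s: "s \<in> Ar C" "S = oa s" unfolding Q_simps by auto
  then obtain t where t: "t \<in> Ar C" "R = oa t" "Dom C t = Cod C s" using Q_next[of s R] R e by auto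
  show "Cmp Q R S \<in> Ar Q" "Dom Q (Cmp Q R S) = Dom Q S" "Cod Q (Cmp Q R S) = Cod Q R" using s t by simp_all
next
  fix S R V assume S: "S \<in> Ar Q" and R: "R \<in> Ar Q" and V: "V \<in> Ar Q" and e: "Cod Q S = Dom Q R \<and> Cod Q R = Dom Q V"
  then obtain s where s: "s \<in> Ar C" "S = oa s" unfolding Q_simps by auto
  then obtain t where t: "t \<in> Ar C" "R = oa t" "Dom C t = Cod C s" using Q_next[of s R] R e by auto
  then obtain v where v: "v \<in> Ar C" "V = oa v" "Dom C v = Cod C t" using Q_next[of t V] V e by auto
  show "Cmp Q V (Cmp Q R S) = Cmp Q (Cmp Q V R) S" using s t v by (simp add: A.D.assoc)
qed

lemma qa_ob: assumes "m \<in> Ob M" "x \<in> Ob C" shows "FO (quot_action G A) (m, oo x) = oo (mx m x)"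
proof -
  have "FO (quot_action G A) (m, oo x) = (\<lambda>y. mx m y) ` oo x" by (simp add: quot_action_def)
  also have "\<dots> = oo (mx m x)"
  proof (intro Set.set_eqI iffI)
    fix z assume "z \<in> (\<lambda>y. mx m y) ` oo x"
    then obtain g where "g \<in> carrier G" "z = mx m (gx g x)" by (auto simp: mem_oo)
    then show "z \<in> oo (mx m x)" unfolding mem_oo using assms by (auto simp: comm_ob)
  next
    fix z assume "z \<in> oo (mx m x)"
    then obtain g where g: "g \<in> carrier G" "z = gx g (mx m x)" unfolding mem_oo by auto
    then have "z = mx m (gx g x)" using assms by (simp add: comm_ob)
    moreover have "gx g x \<in> oo x" using g unfolding mem_oo by auto
    ultimately show "z \<in> (\<lambda>y. mx m y) ` oo x" by blast
  qed
  finally show ?thesis .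
qed
lemma qa_ar: assumes "a \<in> Ar M" "s \<in> Ar C" shows "FA (quot_action G A) (a, oa s) = oa (ma a s)"
proof -
  have "FA (quot_action G A) (a, oa s) = (\<lambda>y. ma a y) ` oa s" by (simp add: quot_action_def)
  also have "\<dots> = oa (ma a s)"
  proof (intro Set.set_eqI iffI)
    fix z assume "z \<in> (\<lambda>y. ma a y) ` oa s"
    then obtain g where "g \<in> carrier G" "z = ma a (gs g s)" by (auto simp: mem_oa)
    then show "z \<in> oa (ma a s)" unfolding mem_oa using assms by (auto simp: comm_ar)
  next
    fix z assume "z \<in> oa (ma a s)"
    then obtain g where g: "g \<in> carrier G" "z = gs g (ma a s)" unfolding mem_oa by auto
    then have "z = ma a (gs g s)" using assms by (simp add: comm_ar)
    moreover have "gs g s \<in> oa s" using g unfolding mem_oa by auto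
    ultimately show "z \<in> (\<lambda>y. ma a y) ` oa s" by blast
  qed
  finally show ?thesis .
qed


abbreviation "qa \<equiv> quot_action G A"
abbreviation "QH H \<equiv> fix_cat M Q qa H"
abbreviation "CG H \<phi> \<equiv> fix_cat (prod_cat M (disc_cat G)) C A {(h, \<phi> h) | h. h \<in> H}"

lemma CG_ob: "x \<in> Ob (CG H \<phi>) \<longleftrightarrow> x \<in> Ob C \<and> (\<forall>h\<in>H. FO A ((h, \<phi> h), x) = x)" by auto
lemma CG_ar: "s \<in> Ar (CG H \<phi>) \<longleftrightarrow> s \<in> Ar C \<and> (\<forall>h\<in>H. FA A ((Idt M h, \<phi> h), s) = s)" by auto

lemma fixo: assumes "x \<in> Ob C" "h \<in> Ob M" "g \<in> carrier G"
  shows "FO A ((h,g),x) = x \<longleftrightarrow> mx h x = gx (inv\<^bsub>G\<^esub> g) x"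
proof
  assume e: "FO A ((h,g),x) = x"
  have "gx (inv\<^bsub>G\<^esub> g) x = gx (inv\<^bsub>G\<^esub> g) (gx g (mx h x))" using comm_ob(2) assms e by simp
  also have "\<dots> = mx h x" using assms by (simp add: gx_mult)
  finally show "mx h x = gx (inv\<^bsub>G\<^esub> g) x" by simp
next
  assume e: "mx h x = gx (inv\<^bsub>G\<^esub> g) x"
  have "FO A ((h,g),x) = gx g (mx h x)" using comm_ob(2) assms by simp
  also have "\<dots> = x" using assms e by (simp add: gx_mult)
  finally show "FO A ((h,g),x) = x" .
qed
lemma fixa: assumes "s \<in> Ar C" "h \<in> Ob M" "g \<in> carrier G"
  shows "FA A ((Idt M h,g),s) = s \<longleftrightarrow> ma (Idt M h) s = gs (inv\<^bsub>G\<^esub> g) s"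
proof
  assume e: "FA A ((Idt M h,g),s) = s"
  have "gs (inv\<^bsub>G\<^esub> g) s = gs (inv\<^bsub>G\<^esub> g) (gs g (ma (Idt M h) s))" using comm_ar(2) assms e by simp
  also have "\<dots> = ma (Idt M h) s" using assms by (simp add: gs_mult)
  finally show "ma (Idt M h) s = gs (inv\<^bsub>G\<^esub> g) s" by simp
next
  assume e: "ma (Idt M h) s = gs (inv\<^bsub>G\<^esub> g) s"
  have "FA A ((Idt M h,g),s) = gs g (ma (Idt M h) s)" using comm_ar(2) assms by simp
  also have "\<dots> = s" using assms e by (simp add: gs_mult)
  finally show "FA A ((Idt M h,g),s) = s" .
qed

lemma qfix_ob: assumes "x \<in> Ob C" "h \<in> Ob M"
  shows "FO qa (h, oo x) = oo x \<longleftrightarrow> (\<exists>g\<in>carrier G. mx h x = gx g x)"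
  using assms qa_ob oo_iff[of x "mx h x"] mem_oo by (metis A_ob G.one_closed)
lemma qfix_ar: assumes "s \<in> Ar C" "h \<in> Ob M"
  shows "FA qa (Idt M h, oa s) = oa s \<longleftrightarrow> (\<exists>g\<in>carrier G. ma (Idt M h) s = gs g s)"
  using assms qa_ar oa_iff[of s "ma (Idt M h) s"] mem_oa by (metis A_ar G.one_closed T.D.id_ar)


end



context qs begin
lemma ma_dom[simp]: "h \<in> Ob M \<Longrightarrow> s \<in> Ar C \<Longrightarrow> Dom C (ma (Idt M h) s) = mx h (Dom C s)" by simp
lemma ma_cod[simp]: "h \<in> Ob M \<Longrightarrow> s \<in> Ar C \<Longrightarrow> Cod C (ma (Idt M h) s) = mx h (Cod C s)" by simp
lemma ma_id: "h \<in> Ob M \<Longrightarrow> x \<in> Ob C \<Longrightarrow> ma (Idt M h) (Idt C x) = Idt C (mx h x)" using A_id by simp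
lemma ma_cmp: "h \<in> Ob M \<Longrightarrow> s \<in> Ar C \<Longrightarrow> t \<in> Ar C \<Longrightarrow> Cod C s = Dom C t \<Longrightarrow>
   ma (Idt M h) (Cmp C t s) = Cmp C (ma (Idt M h) t) (ma (Idt M h) s)"
  using A_cmp[of "Idt M h" "Idt M h" "\<one>\<^bsub>G\<^esub>" s t] by simp

lemma fixQo: assumes x: "x \<in> Ob C" and H: "H \<subseteq> Ob M"
  shows "oo x \<in> Ob (QH H) \<longleftrightarrow> (\<forall>h\<in>H. \<exists>g\<in>carrier G. mx h x = gx g x)"
proof -
  have "oo x \<in> Ob (QH H) \<longleftrightarrow> (\<forall>h\<in>H. FO qa (h, oo x) = oo x)" using x by simp
  also have "\<dots> \<longleftrightarrow> (\<forall>h\<in>H. \<exists>g\<in>carrier G. mx h x = gx g x)"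
    using qfix_ob[OF x] H by (intro ball_cong) auto
  finally show ?thesis .
qed
lemma fixQa: assumes s: "s \<in> Ar C" and H: "H \<subseteq> Ob M"
  shows "oa s \<in> Ar (QH H) \<longleftrightarrow> (\<forall>h\<in>H. \<exists>g\<in>carrier G. ma (Idt M h) s = gs g s)"
proof -
  have "oa s \<in> Ar (QH H) \<longleftrightarrow> (\<forall>h\<in>H. FA qa (Idt M h, oa s) = oa s)" using s by simp
  also have "\<dots> \<longleftrightarrow> (\<forall>h\<in>H. \<exists>g\<in>carrier G. ma (Idt M h) s = gs g s)"
    using qfix_ar[OF s] H by (intro ball_cong) auto
  finally show ?thesis .
qed

lemma QH_cat: assumes H: "H \<subseteq> Ob M" shows "is_cat (QH H)"
proof (rule subcat[OF Q_cat])
  show "\<forall>f\<in>Ar (QH H). Dom Q f \<in> Ob (QH H) \<and> Cod Q f \<in> Ob (QH H)"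
  proof
    fix S assume S: "S \<in> Ar (QH H)"
    then obtain s where s: "s \<in> Ar C" "S = oa s" by (auto simp: Q_simps)
    have a: "\<forall>h\<in>H. \<exists>g\<in>carrier G. ma (Idt M h) s = gs g s" using S s fixQa H by auto
    have "\<exists>g\<in>carrier G. mx h (Dom C s) = gx g (Dom C s)" "\<exists>g\<in>carrier G. mx h (Cod C s) = gx g (Cod C s)"
      if h: "h \<in> H" for h
    proof -
      obtain g where g: "g \<in> carrier G" "ma (Idt M h) s = gs g s" using a h by auto
      have hM: "h \<in> Ob M" using h H by auto
      have "mx h (Dom C s) = gx g (Dom C s)" using g hM s ma_dom[OF hM s(1)] gs_dom[OF g(1) s(1)] by simp
      then show "\<exists>g\<in>carrier G. mx h (Dom C s) = gx g (Dom C s)" using g by auto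
      have "mx h (Cod C s) = gx g (Cod C s)" using g hM s ma_cod[OF hM s(1)] gs_cod[OF g(1) s(1)] by simp
      then show "\<exists>g\<in>carrier G. mx h (Cod C s) = gx g (Cod C s)" using g by auto
    qed
    then show "Dom Q S \<in> Ob (QH H) \<and> Cod Q S \<in> Ob (QH H)" using s H fixQo by simp
  qed
  show "\<forall>x\<in>Ob (QH H). Idt Q x \<in> Ar (QH H)"
  proof
    fix X assume X: "X \<in> Ob (QH H)"
    then obtain x where x: "x \<in> Ob C" "X = oo x" by (auto simp: Q_simps)
    have a: "\<forall>h\<in>H. \<exists>g\<in>carrier G. mx h x = gx g x" using X x H fixQo by auto
    have "\<exists>g\<in>carrier G. ma (Idt M h) (Idt C x) = gs g (Idt C x)" if h: "h \<in> H" for h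
    proof -
      obtain g where g: "g \<in> carrier G" "mx h x = gx g x" using a h by auto
      have hM: "h \<in> Ob M" using h H by auto
      have "ma (Idt M h) (Idt C x) = gs g (Idt C x)" using ma_id[OF hM x(1)] gs_id[OF g(1) x(1)] g by simp
      then show ?thesis using g by auto
    qed
    then show "Idt Q X \<in> Ar (QH H)" using x H fixQa by simp
  qed
  show "\<forall>f\<in>Ar (QH H). \<forall>g\<in>Ar (QH H). Cod Q f = Dom Q g \<longrightarrow> Cmp Q g f \<in> Ar (QH H)"
  proof (intro ballI impI)
    fix S R assume S: "S \<in> Ar (QH H)" and R: "R \<in> Ar (QH H)" and e: "Cod Q S = Dom Q R"
    then obtain s where s: "s \<in> Ar C" "S = oa s" by (auto simp: Q_simps)
    then obtain t where t: "t \<in> Ar C" "R = oa t" "Dom C t = Cod C s" using Q_next[of s R] R e by auto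
    have as: "\<forall>h\<in>H. \<exists>g\<in>carrier G. ma (Idt M h) s = gs g s" using S s fixQa H by auto
    have at: "\<forall>h\<in>H. \<exists>g\<in>carrier G. ma (Idt M h) t = gs g t" using R t fixQa H by auto
    have "\<exists>g\<in>carrier G. ma (Idt M h) (Cmp C t s) = gs g (Cmp C t s)" if h: "h \<in> H" for h
    proof -
      have hM: "h \<in> Ob M" using h H by auto
      obtain g where g: "g \<in> carrier G" "ma (Idt M h) s = gs g s" using as h by auto
      obtain g' where g': "g' \<in> carrier G" "ma (Idt M h) t = gs g' t" using at h by auto
      have "gx g (Cod C s) = mx h (Cod C s)" using ma_cod[OF hM s(1)] gs_cod[OF g(1) s(1)] g by simp
      also have "\<dots> = gx g' (Cod C s)" using ma_dom[OF hM t(1)] gs_dom[OF g'(1) t(1)] g' t by simp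
      finally have "g = g'" using free_eq g g' s by (meson A.D.cod_ob)
      then have "ma (Idt M h) (Cmp C t s) = gs g (Cmp C t s)"
        using ma_cmp[OF hM s(1) t(1)] gs_cmp[OF g(1) s(1) t(1)] g g' t by simp
      then show ?thesis using g by auto
    qed
    then show "Cmp Q R S \<in> Ar (QH H)" using s t H fixQa by simp
  qed
qed (auto simp: Q_simps)

lemma fix_phi: assumes H: "mon_subgroup M T u H" and X: "X \<in> Ob (QH H)" and x: "x \<in> X"
  shows "\<exists>\<phi>. \<phi> \<in> H \<rightarrow> carrier G \<and> (\<forall>h\<in>H. \<forall>k\<in>H. \<phi> (FO T (h,k)) = \<phi> h \<otimes>\<^bsub>G\<^esub> \<phi> k) \<and> x \<in> Ob (CG H \<phi>)"
proof -
  have HM: "H \<subseteq> Ob M" and Hc: "\<forall>h\<in>H. \<forall>k\<in>H. FO T (h,k) \<in> H" using H unfolding mon_subgroup_def by auto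
  have xC: "x \<in> Ob C" "X = oo x" using Q_obE X x by auto
  have "\<forall>h\<in>H. \<exists>g\<in>carrier G. mx h x = gx g x" using X xC HM fixQo by auto
  then obtain \<gamma> where \<gamma>: "\<And>h. h \<in> H \<Longrightarrow> \<gamma> h \<in> carrier G \<and> mx h x = gx (\<gamma> h) x" by metis
  define \<phi> where "\<phi> h = inv\<^bsub>G\<^esub> (\<gamma> h)" for h
  have hom\<gamma>: "\<gamma> (FO T (h,k)) = \<gamma> k \<otimes>\<^bsub>G\<^esub> \<gamma> h" if h: "h \<in> H" and k: "k \<in> H" for h k
  proof (rule free_eq[OF xC(1)])
    have hk: "h \<in> Ob M" "k \<in> Ob M" using h k HM by auto
    have "gx (\<gamma> (FO T (h,k))) x = mx (FO T (h,k)) x" using \<gamma> Hc h k by metis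
    also have "\<dots> = mx h (mx k x)" using mx_mult hk xC by simp
    also have "\<dots> = mx h (gx (\<gamma> k) x)" using \<gamma> k by simp
    also have "\<dots> = gx (\<gamma> k) (mx h x)" using comm_ob hk xC \<gamma> k by simp
    also have "\<dots> = gx (\<gamma> k) (gx (\<gamma> h) x)" using \<gamma> h by simp
    also have "\<dots> = gx (\<gamma> k \<otimes>\<^bsub>G\<^esub> \<gamma> h) x" using gx_mult \<gamma> h k xC by simp
    finally show "gx (\<gamma> (FO T (h,k))) x = gx (\<gamma> k \<otimes>\<^bsub>G\<^esub> \<gamma> h) x" .
    show "\<gamma> (FO T (h,k)) \<in> carrier G" using \<gamma> Hc h k by metis
    show "\<gamma> k \<otimes>\<^bsub>G\<^esub> \<gamma> h \<in> carrier G" using \<gamma> h k by simp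
  qed
  show ?thesis
  proof (intro exI conjI)
    show "\<phi> \<in> H \<rightarrow> carrier G" unfolding \<phi>_def using \<gamma> by auto
    show "\<forall>h\<in>H. \<forall>k\<in>H. \<phi> (FO T (h,k)) = \<phi> h \<otimes>\<^bsub>G\<^esub> \<phi> k"
      unfolding \<phi>_def using hom\<gamma> \<gamma> by (simp add: G.inv_mult_group)
    show "x \<in> Ob (CG H \<phi>)" unfolding CG_ob
      using xC \<gamma> HM fixo by (auto simp: \<phi>_def)
  qed
qed

lemma P2: assumes HM: "H \<subseteq> Ob M" and \<phi>: "\<phi> \<in> H \<rightarrow> carrier G" and x: "x \<in> Ob (CG H \<phi>)"
  shows "oo x \<in> Ob (QH H)"
proof -
  have "\<forall>h\<in>H. \<exists>g\<in>carrier G. mx h x = gx g x" using x HM \<phi> fixo by (auto simp: CG_ob) (meson G.inv_closed PiE subsetD)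
  then show ?thesis using x HM fixQo by (simp add: CG_ob)
qed

lemma P3: assumes HM: "H \<subseteq> Ob M" and \<phi>: "\<phi> \<in> H \<rightarrow> carrier G" and s: "s \<in> Ar (CG H \<phi>)"
  shows "oa s \<in> Ar (QH H)"
proof -
  have "\<forall>h\<in>H. \<exists>g\<in>carrier G. ma (Idt M h) s = gs g s" using s HM \<phi> fixa by (auto simp: CG_ar) (meson G.inv_closed PiE subsetD)
  then show ?thesis using s HM fixQa by (simp add: CG_ar)
qed

lemma P4: assumes HM: "H \<subseteq> Ob M" and \<phi>: "\<phi> \<in> H \<rightarrow> carrier G" and S: "oa s \<in> Ar (QH H)" and s: "s \<in> Ar C"
  and d: "Dom C s \<in> Ob (CG H \<phi>)"
  shows "s \<in> Ar (CG H \<phi>)"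
  unfolding CG_ar
proof (intro conjI ballI)
  show "s \<in> Ar C" by fact
  fix h assume h: "h \<in> H"
  have hM: "h \<in> Ob M" and ph: "\<phi> h \<in> carrier G" using HM \<phi> h by auto
  have "FA qa (Idt M h, oa s) = oa s" using S s h by simp
  then obtain g where g: "g \<in> carrier G" "ma (Idt M h) s = gs g s" using s hM qfix_ar[OF s hM] by auto
  have "mx h (Dom C s) = gx (inv\<^bsub>G\<^esub> (\<phi> h)) (Dom C s)" using d h hM ph fixo by (auto simp: CG_ob)
  moreover have "mx h (Dom C s) = gx g (Dom C s)" using g s hM by (metis ma_dom gs_dom)
  ultimately have "g = inv\<^bsub>G\<^esub> (\<phi> h)" using free_eq g ph s by (metis A.D.dom_ob G.inv_closed)
  then show "FA A ((Idt M h, \<phi> h), s) = s" using fixa s hM ph g by simp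
qed

lemma P4c: assumes HM: "H \<subseteq> Ob M" and \<phi>: "\<phi> \<in> H \<rightarrow> carrier G" and S: "oa s \<in> Ar (QH H)" and s: "s \<in> Ar C"
  and d: "Cod C s \<in> Ob (CG H \<phi>)"
  shows "s \<in> Ar (CG H \<phi>)"
  unfolding CG_ar
proof (intro conjI ballI)
  show "s \<in> Ar C" by fact
  fix h assume h: "h \<in> H"
  have hM: "h \<in> Ob M" and ph: "\<phi> h \<in> carrier G" using HM \<phi> h by auto
  have "FA qa (Idt M h, oa s) = oa s" using S s h by simp
  then obtain g where g: "g \<in> carrier G" "ma (Idt M h) s = gs g s" using s hM qfix_ar[OF s hM] by auto
  have "mx h (Cod C s) = gx (inv\<^bsub>G\<^esub> (\<phi> h)) (Cod C s)" using d h hM ph fixo by (auto simp: CG_ob)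
  moreover have "mx h (Cod C s) = gx g (Cod C s)" using g s hM by (metis ma_cod gs_cod)
  ultimately have "g = inv\<^bsub>G\<^esub> (\<phi> h)" using free_eq g ph s by (metis A.D.cod_ob G.inv_closed)
  then show "FA A ((Idt M h, \<phi> h), s) = s" using fixa s hM ph g by simp
qed

end




locale qf = C: qs M T u G C A + D: qs M T u G D B
  for M :: "('mo,'ma) cat" and T u and G :: "'g monoid" and C :: "('c,'ca) cat" and A
    and D :: "('d,'da) cat" and B +
  fixes f :: "('c,'ca,'d,'da) ftr"
  assumes ff: "is_functor C D f" and eqv: "equivariant (prod_cat M (disc_cat G)) C D A B f"
begin

sublocale f: ftrl C D f by (rule ftrl.intro, rule ff)

lemma f_ob: "m \<in> Ob M \<Longrightarrow> g \<in> carrier G \<Longrightarrow> x \<in> Ob C \<Longrightarrow> FO f (FO A ((m,g),x)) = FO B ((m,g), FO f x)"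
  using eqv unfolding equivariant_def by auto
lemma f_ar: "a \<in> Ar M \<Longrightarrow> g \<in> carrier G \<Longrightarrow> s \<in> Ar C \<Longrightarrow> FA f (FA A ((a,g),s)) = FA B ((a,g), FA f s)"
  using eqv unfolding equivariant_def by auto
lemma f_oo: "x \<in> Ob C \<Longrightarrow> FO f ` C.oo x = D.oo (FO f x)"
  unfolding orb_o_def using f_ob by (auto simp: image_iff) (metis C.u_ob f_ob)
lemma f_oa: "s \<in> Ar C \<Longrightarrow> FA f ` C.oa s = D.oa (FA f s)"
  unfolding orb_a_def using f_ar by (auto simp: image_iff) (metis C.iu(1) f_ar)

abbreviation "qF \<equiv> quot_ftr f"
lemma qF_simps: "FO qF X = FO f ` X" "FA qF S = FA f ` S" by (simp_all add: quot_ftr_def)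
lemma qF_oo[simp]: "x \<in> Ob C \<Longrightarrow> FO qF (C.oo x) = D.oo (FO f x)" by (simp add: qF_simps f_oo)
lemma qF_oa[simp]: "s \<in> Ar C \<Longrightarrow> FA qF (C.oa s) = D.oa (FA f s)" by (simp add: qF_simps f_oa)

lemma qF_functor: "is_functor C.Q D.Q qF"
  unfolding is_functor_def
proof (intro conjI ballI impI)
  show "is_cat C.Q" "is_cat D.Q" by (rule C.Q_cat, rule D.Q_cat)
  fix X assume "X \<in> Ob C.Q"
  then obtain x where x: "x \<in> Ob C" "X = C.oo x" by (auto simp: C.Q_simps)
  show "FO qF X \<in> Ob D.Q" using x by simp
  show "FA qF (Idt C.Q X) = Idt D.Q (FO qF X)" using x by simp
next
  fix S assume "S \<in> Ar C.Q"
  then obtain s where s: "s \<in> Ar C" "S = C.oa s" by (auto simp: C.Q_simps)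
  show "FA qF S \<in> Ar D.Q" "Dom D.Q (FA qF S) = FO qF (Dom C.Q S)" "Cod D.Q (FA qF S) = FO qF (Cod C.Q S)"
    using s by simp_all
next
  fix S R assume S: "S \<in> Ar C.Q" and R: "R \<in> Ar C.Q" and e: "Cod C.Q S = Dom C.Q R"
  then obtain s where s: "s \<in> Ar C" "S = C.oa s" by (auto simp: C.Q_simps)
  then obtain t where t: "t \<in> Ar C" "R = C.oa t" "Dom C t = Cod C s" using C.Q_next[of s R] R e by auto
  show "FA qF (Cmp C.Q R S) = Cmp D.Q (FA qF R) (FA qF S)" using s t by simp
qed

lemma qF_equivariant: "equivariant M C.Q D.Q C.qa D.qa qF"
  unfolding equivariant_def
proof (intro conjI ballI)
  fix m X assume m: "m \<in> Ob M" and "X \<in> Ob C.Q"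
  then obtain x where x: "x \<in> Ob C" "X = C.oo x" by (auto simp: C.Q_simps)
  show "FO qF (FO C.qa (m, X)) = FO D.qa (m, FO qF X)" using x m by (simp add: C.qa_ob D.qa_ob f_ob)
next
  fix a S assume a: "a \<in> Ar M" and "S \<in> Ar C.Q"
  then obtain s where s: "s \<in> Ar C" "S = C.oa s" by (auto simp: C.Q_simps)
  show "FA qF (FA C.qa (a, S)) = FA D.qa (a, FA qF S)" using s a by (simp add: C.qa_ar D.qa_ar f_ar)
qed


lemma fCG_ob: assumes HM: "H \<subseteq> Ob M" and \<phi>: "\<phi> \<in> H \<rightarrow> carrier G" and x: "x \<in> Ob (C.CG H \<phi>)"
  shows "FO f x \<in> Ob (D.CG H \<phi>)"
  unfolding D.CG_ob
proof (intro conjI ballI)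
  have xC: "x \<in> Ob C" using x by (simp add: C.CG_ob)
  then show "FO f x \<in> Ob D" by simp
  fix h assume h: "h \<in> H"
  have hM: "h \<in> Ob M" "\<phi> h \<in> carrier G" using h HM \<phi> by auto
  have "FO B ((h, \<phi> h), FO f x) = FO f (FO A ((h, \<phi> h), x))" using f_ob[OF hM xC] by simp
  also have "\<dots> = FO f x" using x h by (simp add: C.CG_ob)
  finally show "FO B ((h, \<phi> h), FO f x) = FO f x" .
qed

lemma P5: assumes HM: "H \<subseteq> Ob M" and \<phi>: "\<phi> \<in> H \<rightarrow> carrier G" and y: "y \<in> Ob C"
  and Y: "C.oo y \<in> Ob (C.QH H)" and fy: "FO f y \<in> Ob (D.CG H \<phi>)"
  shows "y \<in> Ob (C.CG H \<phi>)"
  unfolding C.CG_ob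
proof (intro conjI ballI)
  show "y \<in> Ob C" by fact
  fix h assume h: "h \<in> H"
  have hM: "h \<in> Ob M" and ph: "\<phi> h \<in> carrier G" using HM \<phi> h by auto
  obtain g where g: "g \<in> carrier G" "C.mx h y = C.gx g y" using Y y HM C.fixQo h by blast
  have "D.mx h (FO f y) = D.gx (inv\<^bsub>G\<^esub> (\<phi> h)) (FO f y)" using fy h hM ph D.fixo by (auto simp: D.CG_ob)
  moreover have "D.mx h (FO f y) = D.gx g (FO f y)"
    using f_ob[of h "\<one>\<^bsub>G\<^esub>" y] f_ob[of u g y] g hM y by simp
  ultimately have "g = inv\<^bsub>G\<^esub> (\<phi> h)" using D.free_eq g ph y by (metis C.G.inv_closed f.F_ob)
  then show "FO A ((h, \<phi> h), y) = y" using C.fixo y hM ph g by simp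
qed

lemma QH_equiv: assumes H: "mon_subgroup M T u H"
  and hyp: "\<And>\<phi>. \<phi> \<in> H \<rightarrow> carrier G \<Longrightarrow> (\<forall>h\<in>H. \<forall>k\<in>H. \<phi> (FO T (h,k)) = \<phi> h \<otimes>\<^bsub>G\<^esub> \<phi> k) \<Longrightarrow>
     cat_equivalence (C.CG H \<phi>) (D.CG H \<phi>) f"
  shows "cat_equivalence (C.QH H) (D.QH H) qF"
proof -
  have HM: "H \<subseteq> Ob M" using H unfolding mon_subgroup_def by auto
  have isf: "is_functor (C.QH H) (D.QH H) qF"
  proof (rule subftr[OF qF_functor C.QH_cat[OF HM] D.QH_cat[OF HM]])
    show "\<forall>x\<in>Ob (C.QH H). FO qF x \<in> Ob (D.QH H)"
    proof
      fix X assume X: "X \<in> Ob (C.QH H)"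
      have "FO D.qa (h, FO qF X) = FO qF X" if h: "h \<in> H" for h
      proof -
        have hM: "h \<in> Ob M" "X \<in> Ob C.Q" using h HM X by auto
        have "FO D.qa (h, FO qF X) = FO qF (FO C.qa (h, X))"
          using qF_equivariant hM unfolding equivariant_def by metis
        also have "\<dots> = FO qF X" using X h by simp
        finally show ?thesis .
      qed
      then show "FO qF X \<in> Ob (D.QH H)" using X qF_functor unfolding is_functor_def by auto
    qed
    show "\<forall>x\<in>Ar (C.QH H). FA qF x \<in> Ar (D.QH H)"
    proof
      fix X assume X: "X \<in> Ar (C.QH H)"
      have "FA D.qa (Idt M h, FA qF X) = FA qF X" if h: "h \<in> H" for h
      proof -
        have hM: "Idt M h \<in> Ar M" "X \<in> Ar C.Q" using h HM X by auto
        have "FA D.qa (Idt M h, FA qF X) = FA qF (FA C.qa (Idt M h, X))"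
          using qF_equivariant hM unfolding equivariant_def by metis
        also have "\<dots> = FA qF X" using X h by simp
        finally show ?thesis .
      qed
      then show "FA qF X \<in> Ar (D.QH H)" using X qF_functor unfolding is_functor_def by auto
    qed
  qed auto
  have full: "full (C.QH H) (D.QH H) qF"
    unfolding full_def
  proof (intro ballI impI)
    fix X Y BB assume X: "X \<in> Ob (C.QH H)" and Y: "Y \<in> Ob (C.QH H)" and BB: "BB \<in> Ar (D.QH H)"
      and e: "Dom (D.QH H) BB = FO qF X \<and> Cod (D.QH H) BB = FO qF Y"
    have "X \<in> Ob C.Q" using X by simp
    then obtain x where x: "x \<in> X" using C.Q_ob_ne by blast
    have xC: "x \<in> Ob C" "X = C.oo x" using C.Q_obE X x by auto
    obtain \<phi> where \<phi>: "\<phi> \<in> H \<rightarrow> carrier G" "\<forall>h\<in>H. \<forall>k\<in>H. \<phi> (FO T (h,k)) = \<phi> h \<otimes>\<^bsub>G\<^esub> \<phi> k"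
      and xG: "x \<in> Ob (C.CG H \<phi>)" using C.fix_phi[OF H X x] by blast
    have eq: "cat_equivalence (C.CG H \<phi>) (D.CG H \<phi>) f" using hyp \<phi> by blast
    interpret fG: ftrl "C.CG H \<phi>" "D.CG H \<phi>" f using eq unfolding cat_equivalence_def ftrl_def by blast
    have fu: "full (C.CG H \<phi>) (D.CG H \<phi>) f" by (rule equiv_full[OF eq])
    have BBQ: "BB \<in> Ar D.Q" using BB by simp
    have "FO f x \<in> Dom D ` BB" using e xC D.oo_self[of "FO f x"] by (simp add: D.Q_simps)
    then obtain b where b: "b \<in> BB" "Dom D b = FO f x" by auto
    have bD: "b \<in> Ar D" "BB = D.oa b" using D.Q_arE BBQ b by auto
    have fxG: "FO f x \<in> Ob (D.CG H \<phi>)" using fCG_ob HM \<phi> xG by blast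
    have bG: "b \<in> Ar (D.CG H \<phi>)" using D.P4[OF HM \<phi>(1)] BB bD b fxG by simp
    have "Cod D b \<in> Cod D ` BB" using b by auto
    also have "Cod D ` BB = FO f ` Y" using e by (simp add: D.Q_simps qF_simps)
    finally obtain y where y: "y \<in> Y" "Cod D b = FO f y" by auto
    have yC: "y \<in> Ob C" "Y = C.oo y" using C.Q_obE Y y by auto
    have fyG: "FO f y \<in> Ob (D.CG H \<phi>)" using fG.D.cod_ob[OF bG] y by simp
    have yG: "y \<in> Ob (C.CG H \<phi>)" using P5[OF HM \<phi>(1) yC(1)] Y yC fyG by simp
    have "Dom (D.CG H \<phi>) b = FO f x \<and> Cod (D.CG H \<phi>) b = FO f y" using b y by simp
    then obtain a where a: "a \<in> Ar (C.CG H \<phi>)" "Dom (C.CG H \<phi>) a = x" "Cod (C.CG H \<phi>) a = y" "FA f a = b"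
      using fu[unfolded full_def, rule_format, OF xG yG bG] by blast
    have aC: "a \<in> Ar C" using a by simp
    show "\<exists>a\<in>Ar (C.QH H). Dom (C.QH H) a = X \<and> Cod (C.QH H) a = Y \<and> FA qF a = BB"
    proof (intro bexI conjI)
      show "C.oa a \<in> Ar (C.QH H)" using C.P3[OF HM \<phi>(1) a(1)] .
      show "Dom (C.QH H) (C.oa a) = X" "Cod (C.QH H) (C.oa a) = Y" "FA qF (C.oa a) = BB"
        using aC a xC yC bD by simp_all
    qed
  qed
  have faith: "faithful (C.QH H) (D.QH H) qF"
    unfolding faithful_def
  proof (intro ballI impI)
    fix A1 A2 assume A1: "A1 \<in> Ar (C.QH H)" and A2: "A2 \<in> Ar (C.QH H)"
      and e: "Dom (C.QH H) A1 = Dom (C.QH H) A2 \<and> Cod (C.QH H) A1 = Cod (C.QH H) A2 \<and> FA qF A1 = FA qF A2"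
    have "A1 \<in> Ar C.Q" using A1 by simp
    then obtain a1 where a1: "a1 \<in> A1" using C.Q_ar_ne by blast
    have a1C: "a1 \<in> Ar C" "A1 = C.oa a1" using C.Q_arE A1 a1 by auto
    define x where "x = Dom C a1"
    have xC: "x \<in> Ob C" using a1C x_def by simp
    have "Dom (C.QH H) A1 \<in> Ob (C.QH H)" using catl.dom_ob[OF catl.intro[OF C.QH_cat[OF HM]] A1] .
    then have XQ: "C.oo x \<in> Ob (C.QH H)" using a1C x_def by simp
    obtain \<phi> where \<phi>: "\<phi> \<in> H \<rightarrow> carrier G" "\<forall>h\<in>H. \<forall>k\<in>H. \<phi> (FO T (h,k)) = \<phi> h \<otimes>\<^bsub>G\<^esub> \<phi> k"
      and xG: "x \<in> Ob (C.CG H \<phi>)" using C.fix_phi[OF H XQ C.oo_self[OF xC]] by blast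
    have eq: "cat_equivalence (C.CG H \<phi>) (D.CG H \<phi>) f" using hyp \<phi> by blast
    have fa: "faithful (C.CG H \<phi>) (D.CG H \<phi>) f" by (rule equiv_faithful[OF eq])
    have "Dom C.Q A2 = Dom C.Q A1" using e by simp
    also have "Dom C.Q A1 = C.oo x" using a1C x_def by simp
    finally have "x \<in> Dom C ` A2" using C.oo_self[OF xC] by (simp add: C.Q_simps)
    then obtain a2 where a2: "a2 \<in> A2" "Dom C a2 = x" by auto
    have a2C: "a2 \<in> Ar C" "A2 = C.oa a2" using C.Q_arE A2 a2 by auto
    have a1G: "a1 \<in> Ar (C.CG H \<phi>)" using C.P4[OF HM \<phi>(1)] A1 a1C xG x_def by simp
    have a2G: "a2 \<in> Ar (C.CG H \<phi>)" using C.P4[OF HM \<phi>(1)] A2 a2C xG a2 by simp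
    have "D.oa (FA f a1) = D.oa (FA f a2)" using e a1C a2C by simp
    then have "FA f a2 \<in> D.oa (FA f a1)" using D.oa_iff a1C a2C by simp
    then obtain g where g: "g \<in> carrier G" "FA f a2 = D.gs g (FA f a1)" unfolding D.mem_oa by auto
    have "D.gx g (FO f x) = FO f x" using g a1C a2C a2 x_def by (metis D.gs_dom f.F_ar f.F_dom)
    then have "g = \<one>\<^bsub>G\<^esub>" using D.free g xC by (meson f.F_ob)
    then have faeq: "FA f a2 = FA f a1" using g a1C by simp
    have "C.oo (Cod C a1) = C.oo (Cod C a2)" using e a1C a2C by simp
    then have "Cod C a2 \<in> C.oo (Cod C a1)" using C.oo_iff a1C a2C by simp
    then obtain k where k: "k \<in> carrier G" "Cod C a2 = C.gx k (Cod C a1)" unfolding C.mem_oo by auto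
    have "D.gx k (FO f (Cod C a1)) = FO f (Cod C a2)" using f_ob[of u k "Cod C a1"] k a1C by simp
    also have "\<dots> = FO f (Cod C a1)" using faeq a1C a2C by (metis f.F_cod)
    finally have "k = \<one>\<^bsub>G\<^esub>" using D.free k a1C by (meson f.F_ob C.A.D.cod_ob)
    then have "Cod C a2 = Cod C a1" using k a1C by simp
    then have "a1 = a2" using fa a1G a2G faeq a2 x_def unfolding faithful_def by simp
    then show "A1 = A2" using a1C a2C by simp
  qed
  have es: "esurj (C.QH H) (D.QH H) qF"
    unfolding esurj_def
  proof
    fix Y assume Y: "Y \<in> Ob (D.QH H)"
    have "Y \<in> Ob D.Q" using Y by simp
    then obtain y where y: "y \<in> Y" using D.Q_ob_ne by blast
    have yD: "y \<in> Ob D" "Y = D.oo y" using D.Q_obE Y y by auto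
    obtain \<phi> where \<phi>: "\<phi> \<in> H \<rightarrow> carrier G" "\<forall>h\<in>H. \<forall>k\<in>H. \<phi> (FO T (h,k)) = \<phi> h \<otimes>\<^bsub>G\<^esub> \<phi> k"
      and yG: "y \<in> Ob (D.CG H \<phi>)" using D.fix_phi[OF H Y y] by blast
    have eq: "cat_equivalence (C.CG H \<phi>) (D.CG H \<phi>) f" using hyp \<phi> by blast
    have es: "esurj (C.CG H \<phi>) (D.CG H \<phi>) f" by (rule equiv_esurj[OF eq])
    obtain x b where xG: "x \<in> Ob (C.CG H \<phi>)" and bi: "cat_iso (D.CG H \<phi>) b" and bd: "Dom (D.CG H \<phi>) b = FO f x" and bc: "Cod (D.CG H \<phi>) b = y"
      using es[unfolded esurj_def, rule_format, OF yG] by blast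
    obtain b' where bG: "b \<in> Ar (D.CG H \<phi>)" and b'G: "b' \<in> Ar (D.CG H \<phi>)" and b': "Dom D b' = Cod D b" "Cod D b' = Dom D b"
      "Cmp D b' b = Idt D (Dom D b)" "Cmp D b b' = Idt D (Cod D b)"
      using bi unfolding cat_iso_def fix_cat_simps(3-6) by blast
    have bD: "b \<in> Ar D" "b' \<in> Ar D" using bG b'G by auto
    have bd: "Dom D b = FO f x" and bc: "Cod D b = y" using bd bc by simp_all
    have xC: "x \<in> Ob C" using xG by simp
    show "\<exists>X\<in>Ob (C.QH H). \<exists>BB. cat_iso (D.QH H) BB \<and> Dom (D.QH H) BB = FO qF X \<and> Cod (D.QH H) BB = Y"
    proof (intro bexI exI conjI)
      show "C.oo x \<in> Ob (C.QH H)" using C.P2[OF HM \<phi>(1) xG] .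
      show "Dom (D.QH H) (D.oa b) = FO qF (C.oo x)" "Cod (D.QH H) (D.oa b) = Y" using bD bd bc xC yD by simp_all
      show "cat_iso (D.QH H) (D.oa b)" unfolding cat_iso_def
      proof (intro conjI bexI)
        show "D.oa b \<in> Ar (D.QH H)" using D.P3[OF HM \<phi>(1) bG] .
        show "D.oa b' \<in> Ar (D.QH H)" using D.P3[OF HM \<phi>(1) b'G] .
        show "Dom (D.QH H) (D.oa b') = Cod (D.QH H) (D.oa b)" "Cod (D.QH H) (D.oa b') = Dom (D.QH H) (D.oa b)"
          using bD b' by simp_all
        show "Cmp (D.QH H) (D.oa b') (D.oa b) = Idt (D.QH H) (Dom (D.QH H) (D.oa b))"
          "Cmp (D.QH H) (D.oa b) (D.oa b') = Idt (D.QH H) (Cod (D.QH H) (D.oa b))"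
          using bD b' by simp_all
      qed
    qed
  qed
  show ?thesis by (rule ff_es_equiv[OF isf full faith es])
qed

end




theorem mainTheorem8:
  fixes M :: "('mo,'ma) cat"
    and T :: "('mo \<times> 'mo, 'ma \<times> 'ma, 'mo, 'ma) ftr"
    and u :: 'mo
    and Fam :: "'mo set set"
    and G :: "'g monoid"
    and C :: "('c,'ca) cat" and D :: "('d,'da) cat"
    and A :: "(('mo \<times> 'g) \<times> 'c, ('ma \<times> 'g) \<times> 'ca, 'c, 'ca) ftr"
    and B :: "(('mo \<times> 'g) \<times> 'd, ('ma \<times> 'g) \<times> 'da, 'd, 'da) ftr"
    and f :: "('c,'ca,'d,'da) ftr"
  assumes "strict_monoidal M T u"
    and "fin_family M T u Fam"
    and "group G"
    and "strict_action (prod_cat M (disc_cat G)) (prod_tensor T (disc_tensor G)) (u, \<one>\<^bsub>G\<^esub>) C A"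
    and "strict_action (prod_cat M (disc_cat G)) (prod_tensor T (disc_tensor G)) (u, \<one>\<^bsub>G\<^esub>) D B"
    and "is_functor C D f"
    and "equivariant (prod_cat M (disc_cat G)) C D A B f"
    and "fam_equiv (prod_cat M (disc_cat G)) C D A B (graph_subgroups T Fam G) f"
    and "free_G_action u G C A"
    and "free_G_action u G D B"
  shows "is_functor (quot_cat M u G C A) (quot_cat M u G D B) (quot_ftr f) \<and>
         equivariant M (quot_cat M u G C A) (quot_cat M u G D B)
           (quot_action G A) (quot_action G B) (quot_ftr f) \<and>
         fam_equiv M (quot_cat M u G C A) (quot_cat M u G D B)
           (quot_action G A) (quot_action G B) Fam (quot_ftr f)"
proof -
  have q1: "qs M T u G C A" unfolding qs_def using assms by blast
  have q2: "qs M T u G D B" unfolding qs_def using assms by blast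
  have q3: "qf_axioms M G C A D B f" unfolding qf_axioms_def using assms by blast
  interpret qf M T u G C A D B f by (rule qf.intro[OF q1 q2 q3])
  have eq3: "cat_equivalence (fix_cat M (quot_cat M u G C A) (quot_action G A) H)
      (fix_cat M (quot_cat M u G D B) (quot_action G B) H) (quot_ftr f)" if H: "H \<in> Fam" for H
  proof (rule QH_equiv)
    show "mon_subgroup M T u H" using assms(2) H unfolding fin_family_def by blast
    fix \<phi> assume \<phi>: "\<phi> \<in> H \<rightarrow> carrier G" "\<forall>h\<in>H. \<forall>k\<in>H. \<phi> (FO T (h,k)) = \<phi> h \<otimes>\<^bsub>G\<^esub> \<phi> k"
    have "{(h, \<phi> h) | h. h \<in> H} \<in> graph_subgroups T Fam G"
      unfolding graph_subgroups_def using H \<phi> by blast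
    then show "cat_equivalence (fix_cat (prod_cat M (disc_cat G)) C A {(h, \<phi> h) | h. h \<in> H})
        (fix_cat (prod_cat M (disc_cat G)) D B {(h, \<phi> h) | h. h \<in> H}) f"
      using assms(8) unfolding fam_equiv_def by blast
  qed
  show ?thesis using qF_functor qF_equivariant eq3 unfolding fam_equiv_def by blast
qed


end
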